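(* In the setting below, two vertices $\rho_\lambda W(D_5)$ and $\rho_{\lambda'}W(D_5)$ ($\lambda,\lambda'\in\Lambda$) of the GKM graph $\mathcal G(EIII)$ are adjacent if and only if $\lambda-\lambda'=\alpha$ for some root $\alpha\in\Phi(E_6)$, and in that case the label of the corresponding edge is $(\alpha)$.
   Context: Identify the dual of the Lie algebra of a maximal torus $T$ of $E_6$ with $\{\sum_{i=1}^8x_ie_i\in\mathbb R^8: x_6=x_7=-x_8\}$ with the standard inner product. The simple roots are $\alpha_1=\frac12(e_1-e_2-e_3-e_4-e_5-e_6-e_7+e_8)$, $\alpha_2=e_1+e_2$, $\alpha_i=e_{i-1}-e_{i-2}$ ($3\le i\le6$), and $\Phi(E_6)=\{\pm(e_i+e_j),\pm(e_i-e_j)\ (1\le i<j\le5)\}\cup\{\pm\frac12(\sum_{k=1}^5\mu_ke_k+e_8-e_7-e_6): \mu_k=\pm1,\ \prod\mu_k=1\}$. $H^*(BT)=H^*(BT;\mathbb Z)$ is the polynomial (symmetric) algebra over $\mathbb Z$ on the lattice $H^2(BT)$ spanned by $t_0=\frac12(e_1+\dots+e_5)-\frac16(e_8-e_7-e_6)$, $t_i=e_i+\frac13(e_8-e_7-e_6)$ ($1\le i\le5$), $x=\frac12(e_1+\dots+e_5-e_6-e_7+e_8)$; $W(E_6)$ acts on it. Let $W(D_5)\subset W(E_6)$ be generated by the reflections of $\alpha_2,\dots,\alpha_6$, let $\bar t=\frac23(e_8-e_7-e_6)$ (fixed by $W(D_5)$), $\Lambda=\{w(\bar t):w\in W(E_6)\}$,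 and for $\lambda\in\Lambda$ fix $\rho_\lambda\in W(E_6)$ with $\rho_\lambda(\bar t)=\lambda$ (so $wW(D_5)\mapsto w(\bar t)$ identifies $W(E_6)/W(D_5)$ with $\Lambda$). The GKM graph $\mathcal G(EIII)$ has vertex set $W(E_6)/W(D_5)$ and, for distinct vertices $vW(D_5)\ne wW(D_5)$ and each positive root $\alpha$ (positive with respect to the simple roots above) with $\sigma_\alpha vW(D_5)=wW(D_5)$, an edge labelled by the ideal $(\alpha)\subset H^*(BT)$; here $\sigma_\alpha$ is the reflection of $\alpha$. *)

theory Defs
  imports Complex_Main "HOL-Library.Function_Algebras"
begin

(* Vectors of R^8 are modelled as functions nat => real supported on {1..8};
   addition/subtraction are pointwise (Function_Algebras). *)
type_synonym vec = "nat \<Rightarrow> real"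

definition e :: "nat \<Rightarrow> vec" where
  "e i = (\<lambda>k. if k = i then 1 else 0)"

definition smul :: "real \<Rightarrow> vec \<Rightarrow> vec" (infixr "*\<^sub>v" 75) where
  "c *\<^sub>v v = (\<lambda>k. c * v k)"

definition ip :: "vec \<Rightarrow> vec \<Rightarrow> real" where
  "ip u v = (\<Sum>k\<in>{1..8}. u k * v k)"

definition refl :: "vec \<Rightarrow> vec \<Rightarrow> vec" where
  "refl a v = v - (2 * ip v a / ip a a) *\<^sub>v a"

definition simple_root :: "nat \<Rightarrow> vec" where
  "simple_root i =
     (if i = 1 then (1/2) *\<^sub>v (e 1 - e 2 - e 3 - e 4 - e 5 - e 6 - e 7 + e 8)
      else if i = 2 then e 1 + e 2
      else e (i - 1) - e (i - 2))"

definition PhiE6 :: "vec set" where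
  "PhiE6 =
     {s *\<^sub>v (e i + e j) | s i j. s \<in> {1, -1} \<and> 1 \<le> i \<and> i < j \<and> j \<le> 5}
   \<union> {s *\<^sub>v (e i - e j) | s i j. s \<in> {1, -1} \<and> 1 \<le> i \<and> i < j \<and> j \<le> 5}
   \<union> {s *\<^sub>v ((1/2) *\<^sub>v ((\<Sum>k\<in>{1..5}. mu k *\<^sub>v e k) + e 8 - e 7 - e 6)) | s mu.
        s \<in> {1, -1} \<and> (\<forall>k\<in>{1..5}. mu k \<in> {1, -1}) \<and> (\<Prod>k\<in>{1..5}. mu k) = 1}"

definition pos_roots :: "vec set" where
  "pos_roots = {a \<in> PhiE6. \<exists>c :: nat \<Rightarrow> nat. a = (\<Sum>i\<in>{1..6}. real (c i) *\<^sub>v simple_root i)}"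

inductive_set WE6 :: "(vec \<Rightarrow> vec) set" where
  WE6_id: "id \<in> WE6"
| WE6_step: "w \<in> WE6 \<Longrightarrow> i \<in> {1..6} \<Longrightarrow> refl (simple_root i) \<circ> w \<in> WE6"

inductive_set WD5 :: "(vec \<Rightarrow> vec) set" where
  WD5_id: "id \<in> WD5"
| WD5_step: "w \<in> WD5 \<Longrightarrow> i \<in> {2..6} \<Longrightarrow> refl (simple_root i) \<circ> w \<in> WD5"

definition coset :: "(vec \<Rightarrow> vec) \<Rightarrow> (vec \<Rightarrow> vec) set" where
  "coset w = {w \<circ> u | u. u \<in> WD5}"

definition tbar :: vec where
  "tbar = (2/3) *\<^sub>v (e 8 - e 7 - e 6)"

definition Lambda :: "vec set" where
  "Lambda = {w tbar | w. w \<in> WE6}"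

definition tgen :: "nat \<Rightarrow> vec" where
  "tgen i = (if i = 0 then (1/2) *\<^sub>v (e 1 + e 2 + e 3 + e 4 + e 5) - (1/6) *\<^sub>v (e 8 - e 7 - e 6)
             else e i + (1/3) *\<^sub>v (e 8 - e 7 - e 6))"

definition xgen :: vec where
  "xgen = (1/2) *\<^sub>v (e 1 + e 2 + e 3 + e 4 + e 5 - e 6 - e 7 + e 8)"

definition H2 :: "vec set" where
  "H2 = {(\<Sum>i\<in>{0..5}. real_of_int (c i) *\<^sub>v tgen i) + real_of_int d *\<^sub>v xgen | c d. True}"

(* H^*(BT) = Sym_Z(H^2(BT)), realised as the Z-algebra of polynomial functions on the
   Lie algebra (inside R^8) generated by the linear forms  v |-> <l, v>,  l in H^2(BT). *)
inductive_set HBT :: "(vec \<Rightarrow> real) set" where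
  HBT_const: "(\<lambda>v. real_of_int c) \<in> HBT"
| HBT_lin: "l \<in> H2 \<Longrightarrow> (\<lambda>v. ip l v) \<in> HBT"
| HBT_add: "f \<in> HBT \<Longrightarrow> g \<in> HBT \<Longrightarrow> (\<lambda>v. f v + g v) \<in> HBT"
| HBT_mult: "f \<in> HBT \<Longrightarrow> g \<in> HBT \<Longrightarrow> (\<lambda>v. f v * g v) \<in> HBT"

definition label_ideal :: "vec \<Rightarrow> (vec \<Rightarrow> real) set" where
  "label_ideal a = {(\<lambda>v. ip a v * f v) | f. f \<in> HBT}"

definition GKM_vertices :: "(vec \<Rightarrow> vec) set set" where
  "GKM_vertices = {coset w | w. w \<in> WE6}"

definition GKM_edge :: "(vec \<Rightarrow> vec) set \<Rightarrow> (vec \<Rightarrow> vec) set \<Rightarrow> vec \<Rightarrow> bool" where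
  "GKM_edge C C' b \<longleftrightarrow> C \<in> GKM_vertices \<and> C' \<in> GKM_vertices \<and> C \<noteq> C' \<and>
      b \<in> pos_roots \<and> (\<lambda>u. refl b \<circ> u) ` C = C'"

definition GKM_adjacent :: "(vec \<Rightarrow> vec) set \<Rightarrow> (vec \<Rightarrow> vec) set \<Rightarrow> bool" where
  "GKM_adjacent C C' \<longleftrightarrow> (\<exists>b. GKM_edge C C' b)"

end

theory Submission
  imports Defs
begin


lemma sum8: "(\<Sum>k\<in>{1..8::nat}. f k) = f 1 + f 2 + f 3 + f 4 + f 5 + f 6 + f 7 + (f 8::real)"
  by (simp add: numeral_eq_Suc sum.atLeast_Suc_atMost add.assoc)

lemma smul_apply[simp]: "(c *\<^sub>v v) k = c * v k" by (simp add: smul_def)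

lemma ip_sym: "ip u v = ip v u" by (simp add: ip_def mult.commute)
lemma ip_diff: "ip (u - v) w = ip u w - ip v w" by (simp add: ip_def algebra_simps sum_subtractf)
lemma ip_add: "ip (u + v) w = ip u w + ip v w" by (simp add: ip_def algebra_simps sum.distrib)
lemma ip_smul: "ip (c *\<^sub>v u) w = c * ip u w" by (simp add: ip_def algebra_simps sum_distrib_left)
lemma ip_diff2: "ip w (u - v) = ip w u - ip w v" by (simp add: ip_def algebra_simps sum_subtractf)
lemma ip_smul2: "ip w (c *\<^sub>v u) = c * ip w u" by (simp add: ip_def algebra_simps sum_distrib_left)

lemma refl_refl: assumes "ip a a \<noteq> 0" shows "refl a (refl a v) = v"
proof -
  have "ip (refl a v) a = - ip v a" using assms
    by (simp add: refl_def ip_diff ip_smul)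
  then show ?thesis using assms
    by (simp add: refl_def fun_eq_iff)
qed

lemma refl_ip: assumes "ip a a \<noteq> 0" shows "ip (refl a x) (refl a y) = ip x y"
  using assms by (simp add: refl_def ip_diff ip_smul ip_diff2 ip_smul2 ip_sym[of a x] ip_sym[of a y])

lemma refl_lin: "refl a (x - c *\<^sub>v y) = refl a x - c *\<^sub>v refl a y"
  by (simp add: refl_def fun_eq_iff ip_diff ip_smul algebra_simps diff_divide_distrib)

lemma refl_conj: assumes "ip a a \<noteq> 0" "ip v v \<noteq> 0"
  shows "refl (refl a v) = refl a \<circ> refl v \<circ> refl a"
proof
  fix x
  have 1: "(refl a \<circ> refl v \<circ> refl a) x = refl a (refl a x - (2 * ip (refl a x) v / ip v v) *\<^sub>v v)"
    by (simp add: refl_def)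
  have 2: "refl a (refl a x - (2 * ip (refl a x) v / ip v v) *\<^sub>v v) = x - (2 * ip (refl a x) v / ip v v) *\<^sub>v refl a v"
    by (simp add: refl_lin refl_refl assms)
  have 3: "ip (refl a x) v = ip x (refl a v)"
    using refl_ip[OF assms(1), of x "refl a v"] refl_refl[OF assms(1)] by simp
  have 4: "ip v v = ip (refl a v) (refl a v)" using refl_ip[OF assms(1)] by simp
  show "refl (refl a v) x = (refl a \<circ> refl v \<circ> refl a) x"
  proof -
    have 5: "refl (refl a v) x = x - (2 * ip x (refl a v) / ip (refl a v) (refl a v)) *\<^sub>v refl a v"
      by (rule refl_def)
    note 6 = trans[OF 1 2, unfolded 3 4]
    show ?thesis unfolding 5 6 by (rule refl)
  qed
qed

lemma refl_neg: "refl (- a) = refl a"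
  by (simp add: refl_def fun_eq_iff ip_def sum_negf)

definition vd :: "int \<Rightarrow> int list \<Rightarrow> vec" where
  "vd d x = (\<lambda>k. if k \<in> {1..8} then of_int (x!(k-1)) / of_int d else 0)"

definition mp :: "int \<Rightarrow> int list list \<Rightarrow> vec \<Rightarrow> vec" where
  "mp d N v = (\<lambda>k. if k \<in> {1..8} then (\<Sum>j\<in>{1..8}. of_int (N!(k-1)!(j-1)) / of_int d * v j) else v k)"

definition imm :: "int list list \<Rightarrow> int list list \<Rightarrow> int list list" where
  "imm A B = map (\<lambda>k. map (\<lambda>j. \<Sum>l<8. A!k!l * B!l!j) [0..<8]) [0..<8]"

definition imv :: "int list list \<Rightarrow> int list \<Rightarrow> int list" where
  "imv N x = map (\<lambda>k. \<Sum>j<8. N!k!j * x!j) [0..<8]"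

lemma sum18_shift: "(\<Sum>j\<in>{1..8::nat}. f (j - 1)) = (\<Sum>j<8. f j)"
proof -
  have "(\<Sum>j\<in>{Suc 0..Suc 7}. f (j - 1)) = (\<Sum>j\<in>{0..7}. f j)"
    by (subst sum.shift_bounds_cl_Suc_ivl) simp
  moreover have "{0..7::nat} = {..<8}" by auto
  ultimately show ?thesis by simp
qed

lemma nth_imm: "k < 8 \<Longrightarrow> j < 8 \<Longrightarrow> imm A B ! k ! j = (\<Sum>l<8. A!k!l * B!l!j)"
  by (simp add: imm_def)

lemma nth_imv: "k < 8 \<Longrightarrow> imv N x ! k = (\<Sum>j<8. N!k!j * x!j)"
  by (simp add: imv_def)

lemma mp_comp: assumes "a \<noteq> 0" "b \<noteq> 0"
  shows "mp a A \<circ> mp b B = mp (a * b) (imm A B)"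
proof (rule ext)
  fix v
  show "(mp a A \<circ> mp b B) v = mp (a * b) (imm A B) v"
  proof (rule ext)
    fix k
    show "(mp a A \<circ> mp b B) v k = mp (a * b) (imm A B) v k"
    proof (cases "k \<in> {1..8}")
      case False then show ?thesis by (auto simp add: mp_def)
    next
      case True
      have "(mp a A \<circ> mp b B) v k = (\<Sum>l\<in>{1..8}. of_int (A!(k-1)!(l-1)) / of_int a *
             (\<Sum>j\<in>{1..8}. of_int (B!(l-1)!(j-1)) / of_int b * v j))"
        using True by (simp add: mp_def)
      also have "\<dots> = (\<Sum>j\<in>{1..8}. (\<Sum>l\<in>{1..8}. of_int (A!(k-1)!(l-1)) / of_int a *
             (of_int (B!(l-1)!(j-1)) / of_int b * v j)))"
        by (simp add: sum_distrib_left, rule sum.swap)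
      also have "\<dots> = (\<Sum>j\<in>{1..8}. of_int (imm A B!(k-1)!(j-1)) / of_int (a*b) * v j)"
      proof (rule sum.cong[OF refl])
        fix j assume j: "j \<in> {1..8::nat}"
        have "imm A B!(k-1)!(j-1) = (\<Sum>l<8. A!(k-1)!l * B!l!(j-1))"
          using True j by (intro nth_imm) auto
        also have "\<dots> = (\<Sum>l\<in>{1..8}. A!(k-1)!(l-1) * B!(l-1)!(j-1))"
          by (rule sum18_shift[symmetric])
        finally have e: "imm A B!(k-1)!(j-1) = (\<Sum>l\<in>{1..8}. A!(k-1)!(l-1) * B!(l-1)!(j-1))" .
        show "(\<Sum>l\<in>{1..8}. of_int (A!(k-1)!(l-1)) / of_int a *
             (of_int (B!(l-1)!(j-1)) / of_int b * v j)) = of_int (imm A B!(k-1)!(j-1)) / of_int (a*b) * v j"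
          unfolding e of_int_sum of_int_mult using assms by (simp add: sum_divide_distrib sum_distrib_right mult_ac) (simp add: sum_distrib_left)
      qed
      also have "\<dots> = mp (a * b) (imm A B) v k" using True by (simp add: mp_def)
      finally show ?thesis .
    qed
  qed
qed

lemma mp_vd: assumes "a \<noteq> 0" "d \<noteq> 0" shows "mp a N (vd d x) = vd (a * d) (imv N x)"
proof (rule ext)
  fix k
  show "mp a N (vd d x) k = vd (a * d) (imv N x) k"
  proof (cases "k \<in> {1..8}")
    case False then show ?thesis by (auto simp add: mp_def vd_def)
  next
    case True
    have "imv N x ! (k-1) = (\<Sum>j<8. N!(k-1)!j * x!j)" using True by (intro nth_imv) auto
    also have "\<dots> = (\<Sum>j\<in>{1..8}. N!(k-1)!(j-1) * x!(j-1))" by (rule sum18_shift[symmetric])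
    finally have e: "imv N x ! (k-1) = (\<Sum>j\<in>{1..8}. N!(k-1)!(j-1) * x!(j-1))" .
    have "mp a N (vd d x) k = (\<Sum>j\<in>{1..8}. of_int (N!(k-1)!(j-1)) / of_int a * (of_int (x!(j-1)) / of_int d))"
      using True by (simp add: mp_def vd_def)
    also have "\<dots> = of_int (\<Sum>j\<in>{1..8}. N!(k-1)!(j-1) * x!(j-1)) / of_int (a * d)"
      using assms unfolding of_int_sum by (simp add: sum_divide_distrib)
    also have "\<dots> = vd (a * d) (imv N x) k"
      using True by (simp only: vd_def e if_True)
    finally show ?thesis .
  qed
qed

definition veq :: "int \<Rightarrow> int list \<Rightarrow> int \<Rightarrow> int list \<Rightarrow> bool" where
  "veq d x d' y \<longleftrightarrow> list_all (\<lambda>k. x!k * d' = y!k * d) [0..<8]"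

lemma vd_eq: assumes "d \<noteq> 0" "d' \<noteq> 0" "veq d x d' y" shows "vd d x = vd d' y"
proof (rule ext)
  fix k
  show "vd d x k = vd d' y k"
  proof (cases "k \<in> {1..8}")
    case True
    then have "x!(k-1) * d' = y!(k-1) * d" using assms(3) by (auto simp: veq_def list_all_iff)
    then have "real_of_int (x!(k-1)) * of_int d' = of_int (y!(k-1)) * of_int d"
      by (metis of_int_mult)
    then show ?thesis using True assms by (simp add: vd_def field_simps)
  qed (auto simp add: vd_def)
qed

definition meq :: "int \<Rightarrow> int list list \<Rightarrow> int \<Rightarrow> int list list \<Rightarrow> bool" where
  "meq d A d' B \<longleftrightarrow> list_all (\<lambda>k. list_all (\<lambda>j. A!k!j * d' = B!k!j * d) [0..<8]) [0..<8]"

lemma mp_eq: assumes "d \<noteq> 0" "d' \<noteq> 0" "meq d A d' B" shows "mp d A = mp d' B"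
proof (intro ext)
  fix v k
  show "mp d A v k = mp d' B v k"
  proof (cases "k \<in> {1..8}")
    case True
    have "\<And>j. j \<in> {1..8} \<Longrightarrow> real_of_int (A!(k-1)!(j-1)) / of_int d = of_int (B!(k-1)!(j-1)) / of_int d'"
    proof -
      fix j assume j: "j \<in> {1..8::nat}"
      then have "A!(k-1)!(j-1) * d' = B!(k-1)!(j-1) * d" using True assms(3)
        by (auto simp: meq_def list_all_iff)
      then have "real_of_int (A!(k-1)!(j-1)) * of_int d' = of_int (B!(k-1)!(j-1)) * of_int d"
        by (metis of_int_mult)
      then show "real_of_int (A!(k-1)!(j-1)) / of_int d = of_int (B!(k-1)!(j-1)) / of_int d'"
        using assms by (simp add: field_simps)
    qed
    then show ?thesis using True by (simp add: mp_def)
  qed (auto simp add: mp_def)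
qed

definition rm :: "int list \<Rightarrow> int list list" where
  "rm x = map (\<lambda>k. map (\<lambda>j. (if k = j then (\<Sum>i<8. x!i * x!i) else 0) - 2 * x!k * x!j) [0..<8]) [0..<8]"

lemma ip_vd: "ip v (vd d x) = (\<Sum>j\<in>{1..8}. v j * of_int (x!(j-1))) / of_int d"
  by (simp add: ip_def vd_def sum_divide_distrib)

lemma refl_vd: assumes "d \<noteq> 0" "(\<Sum>i<8. x!i * x!i) \<noteq> 0"
  shows "refl (vd d x) = mp (\<Sum>i<8. x!i * x!i) (rm x)"
proof (intro ext)
  fix v k
  define q where "q = (\<Sum>i<8. x!i * x!i)"
  have q: "ip (vd d x) (vd d x) = of_int q / (of_int d * of_int d)"
  proof -
    have "ip (vd d x) (vd d x) = (\<Sum>j\<in>{1..8}. of_int (x!(j-1) * x!(j-1))) / (of_int d * of_int d)"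
      unfolding ip_def by (simp add: vd_def sum_divide_distrib)
    also have "(\<Sum>j\<in>{1..8}. real_of_int (x!(j-1) * x!(j-1))) = of_int q"
      unfolding q_def of_int_sum by (rule sum18_shift)
    finally show ?thesis .
  qed
  have q0: "real_of_int q \<noteq> 0" using assms q_def by (simp del: of_int_sum)
  show "refl (vd d x) v k = mp (\<Sum>i<8. x!i * x!i) (rm x) v k"
  proof (cases "k \<in> {1..8}")
    case False then show ?thesis by (auto simp add: refl_def mp_def vd_def)
  next
    case True
    have rmk: "\<And>j. j \<in> {1..8} \<Longrightarrow> rm x!(k-1)!(j-1) = (if k = j then q else 0) - 2 * x!(k-1) * x!(j-1)"
      using True by (auto simp: rm_def q_def)
    have "mp (\<Sum>i<8. x!i * x!i) (rm x) v k = (\<Sum>j\<in>{1..8}. ((if k = j then 1 else 0) * v j -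
        2 * of_int (x!(k-1)) * (of_int (x!(j-1)) * v j) / of_int q))"
      unfolding mp_def q_def[symmetric] using True
    proof (simp only: if_True, intro sum.cong refl)
      fix j assume j: "j \<in> {1..8::nat}"
      show "real_of_int (rm x ! (k - 1) ! (j - 1)) / real_of_int q * v j =
         (if k = j then 1 else 0) * v j - 2 * real_of_int (x ! (k - 1)) * (real_of_int (x ! (j - 1)) * v j) / real_of_int q"
        unfolding rmk[OF j] using q0 by (simp add: field_simps)
    qed
    also have "\<dots> = v k - 2 * of_int (x!(k-1)) * (\<Sum>j\<in>{1..8}. v j * of_int (x!(j-1))) / of_int q"
    proof -
      have d: "(\<Sum>j\<in>{1..8::nat}. (if k = j then 1 else 0) * v j) = v k"
      proof -
        have "(\<Sum>j\<in>{1..8::nat}. (if k = j then 1 else 0) * v j) = (\<Sum>j\<in>{1..8::nat}. if k = j then v j else 0)"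
          by (rule sum.cong) auto
        also have "\<dots> = v k" using True by (subst sum.delta') auto
        finally show ?thesis .
      qed
      show ?thesis unfolding sum_subtractf d
        by (simp add: sum_divide_distrib sum_distrib_left mult.commute mult.left_commute)
    qed
    also have "\<dots> = refl (vd d x) v k"
    proof -
      have vk: "vd d x k = of_int (x!(k-1)) / of_int d" using True by (simp add: vd_def)
      show ?thesis unfolding refl_def minus_apply smul_apply q unfolding ip_vd vk
        using assms q0 by (simp add: field_simps)
    qed
    finally show ?thesis by simp
  qed
qed



definition Mats :: "int list list list" where "Mats = [[[4, 0, 0, 0, 0, 0, 0, 0], [0, 4, 0, 0, 0, 0, 0, 0], [0, 0, 4, 0, 0, 0, 0, 0], [0, 0, 0, 4, 0, 0, 0, 0], [0, 0, 0, 0, 4, 0, 0, 0], [0, 0, 0, 0, 0, 4, 0, 0], [0, 0, 0, 0, 0, 0, 4, 0], [0, 0, 0, 0, 0, 0, 0, 4]], [[3, 1, 1, 1, 1, 1, 1, -1], [1, 3, -1, -1, -1, -1, -1, 1], [1, -1, 3, -1, -1, -1, -1, 1], [1, -1, -1, 3, -1, -1, -1, 1], [1, -1, -1, -1, 3, -1, -1, 1], [1, -1, -1, -1, -1, 3, -1, 1], [1, -1, -1, -1, -1, -1, 3, 1], [-1, 1, 1, 1, 1, 1, 1, 3]], [[1, 3, -1, -1, -1, -1, -1, 1], [3, 1, 1, 1, 1, 1, 1, -1], [1, -1, 3, -1, -1, -1, -1, 1], [1, -1, -1, 3, -1, -1, -1, 1], [1, -1, -1, -1, 3, -1, -1, 1],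 [1, -1, -1, -1, -1, 3, -1, 1], [1, -1, -1, -1, -1, -1, 3, 1], [-1, 1, 1, 1, 1, 1, 1, 3]], [[1, 3, -1, -1, -1, -1, -1, 1], [1, -1, 3, -1, -1, -1, -1, 1], [3, 1, 1, 1, 1, 1, 1, -1], [1, -1, -1, 3, -1, -1, -1, 1], [1, -1, -1, -1, 3, -1, -1, 1], [1, -1, -1, -1, -1, 3, -1, 1], [1, -1, -1, -1, -1, -1, 3, 1], [-1, 1, 1, 1, 1, 1, 1, 3]], [[-1, 1, -3, 1, 1, 1, 1, -1], [-1, -3, 1, 1, 1, 1, 1, -1], [3, 1, 1, 1, 1, 1, 1, -1], [1, -1, -1, 3, -1, -1, -1, 1], [1, -1, -1, -1, 3, -1, -1, 1], [1, -1, -1, -1, -1, 3, -1, 1], [1, -1, -1, -1, -1, -1, 3, 1], [-1, 1, 1, 1, 1, 1, 1, 3]], [[1, 3, -1, -1, -1, -1, -1, 1], [1, -1, 3, -1, -1, -1, -1, 1], [1, -1, -1, 3, -1, -1, -1, 1], [3, 1, 1, 1, 1, 1, 1, -1], [1, -1, -1, -1, 3, -1, -1, 1], [1, -1, -1, -1, -1, 3, -1, 1], [1, -1, -1, -1, -1, -1, 3, 1], [-1, 1, 1, 1, 1, 1, 1, 3]], [[-1, 1, -3, 1, 1, 1, 1, -1], [-1, -3, 1, 1, 1, 1, 1, -1], [1, -1, -1, 3, -1, -1, -1, 1], [3, 1, 1, 1, 1, 1, 1, -1], [1, -1, -1, -1, 3, -1, -1, 1], [1, -1, -1, -1, -1,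 3, -1, 1], [1, -1, -1, -1, -1, -1, 3, 1], [-1, 1, 1, 1, 1, 1, 1, 3]], [[1, 3, -1, -1, -1, -1, -1, 1], [1, -1, 3, -1, -1, -1, -1, 1], [1, -1, -1, 3, -1, -1, -1, 1], [1, -1, -1, -1, 3, -1, -1, 1], [3, 1, 1, 1, 1, 1, 1, -1], [1, -1, -1, -1, -1, 3, -1, 1], [1, -1, -1, -1, -1, -1, 3, 1], [-1, 1, 1, 1, 1, 1, 1, 3]], [[-1, 1, -3, 1, 1, 1, 1, -1], [1, -1, -1, 3, -1, -1, -1, 1], [-1, -3, 1, 1, 1, 1, 1, -1], [3, 1, 1, 1, 1, 1, 1, -1], [1, -1, -1, -1, 3, -1, -1, 1], [1, -1, -1, -1, -1, 3, -1, 1], [1, -1, -1, -1, -1, -1, 3, 1], [-1, 1, 1, 1, 1, 1, 1, 3]], [[-1, 1, -3, 1, 1, 1, 1, -1], [-1, -3, 1, 1, 1, 1, 1, -1], [1, -1, -1, 3, -1, -1, -1, 1], [1, -1, -1, -1, 3, -1, -1, 1], [3, 1, 1, 1, 1, 1, 1, -1], [1, -1, -1, -1, -1, 3, -1, 1], [1, -1, -1, -1, -1, -1, 3, 1], [-1, 1, 1, 1, 1, 1, 1, 3]], [[1, -1, -1, 3, -1, -1, -1, 1], [-1, 1, -3, 1, 1, 1, 1, -1], [-1, -3, 1, 1, 1, 1, 1, -1], [3, 1, 1, 1, 1, 1, 1, -1], [1, -1, -1, -1, 3, -1, -1, 1], [1, -1, -1, -1, -1, 3, -1, 1], [1, -1,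 -1, -1, -1, -1, 3, 1], [-1, 1, 1, 1, 1, 1, 1, 3]], [[-1, 1, -3, 1, 1, 1, 1, -1], [1, -1, -1, 3, -1, -1, -1, 1], [-1, -3, 1, 1, 1, 1, 1, -1], [1, -1, -1, -1, 3, -1, -1, 1], [3, 1, 1, 1, 1, 1, 1, -1], [1, -1, -1, -1, -1, 3, -1, 1], [1, -1, -1, -1, -1, -1, 3, 1], [-1, 1, 1, 1, 1, 1, 1, 3]], [[2, -2, -2, 2, 0, 0, 0, 0], [-2, 2, -2, 2, 0, 0, 0, 0], [-2, -2, 2, 2, 0, 0, 0, 0], [2, 2, 2, 2, 0, 0, 0, 0], [0, 0, 0, 0, 2, -2, -2, 2], [0, 0, 0, 0, -2, 2, -2, 2], [0, 0, 0, 0, -2, -2, 2, 2], [0, 0, 0, 0, 2, 2, 2, 2]], [[1, -1, -1, 3, -1, -1, -1, 1], [-1, 1, -3, 1, 1, 1, 1, -1], [-1, -3, 1, 1, 1, 1, 1, -1], [1, -1, -1, -1, 3, -1, -1, 1], [3, 1, 1, 1, 1, 1, 1, -1], [1, -1, -1, -1, -1, 3, -1, 1], [1, -1, -1, -1, -1, -1, 3, 1], [-1, 1, 1, 1, 1, 1, 1, 3]], [[-1, 1, -3, 1, 1, 1, 1, -1], [1, -1, -1, 3, -1, -1, -1, 1], [1, -1, -1, -1, 3, -1, -1, 1], [-1, -3, 1, 1, 1, 1, 1, -1], [3, 1, 1, 1, 1, 1, 1, -1], [1, -1, -1, -1, -1, 3, -1, 1], [1, -1, -1, -1, -1, -1,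 3, 1], [-1, 1, 1, 1, 1, 1, 1, 3]], [[2, -2, -2, 2, 0, 0, 0, 0], [-2, 2, -2, 2, 0, 0, 0, 0], [-2, -2, 2, 2, 0, 0, 0, 0], [0, 0, 0, 0, 2, -2, -2, 2], [2, 2, 2, 2, 0, 0, 0, 0], [0, 0, 0, 0, -2, 2, -2, 2], [0, 0, 0, 0, -2, -2, 2, 2], [0, 0, 0, 0, 2, 2, 2, 2]], [[1, -1, -1, 3, -1, -1, -1, 1], [-1, 1, -3, 1, 1, 1, 1, -1], [1, -1, -1, -1, 3, -1, -1, 1], [-1, -3, 1, 1, 1, 1, 1, -1], [3, 1, 1, 1, 1, 1, 1, -1], [1, -1, -1, -1, -1, 3, -1, 1], [1, -1, -1, -1, -1, -1, 3, 1], [-1, 1, 1, 1, 1, 1, 1, 3]], [[2, -2, -2, 2, 0, 0, 0, 0], [-2, 2, -2, 2, 0, 0, 0, 0], [0, 0, 0, 0, 2, -2, -2, 2], [-2, -2, 2, 2, 0, 0, 0, 0], [2, 2, 2, 2, 0, 0, 0, 0], [0, 0, 0, 0, -2, 2, -2, 2], [0, 0, 0, 0, -2, -2, 2, 2], [0, 0, 0, 0, 2, 2, 2, 2]], [[1, -1, -1, 3, -1, -1, -1, 1], [1, -1, -1, -1, 3, -1, -1, 1], [-1, 1, -3, 1, 1, 1, 1, -1], [-1, -3, 1, 1, 1, 1, 1, -1], [3, 1, 1, 1, 1, 1, 1, -1], [1, -1, -1, -1, -1, 3, -1, 1], [1, -1, -1, -1, -1, -1, 3, 1], [-1, 1, 1,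 1, 1, 1, 1, 3]], [[2, -2, -2, 2, 0, 0, 0, 0], [0, 0, 0, 0, 2, -2, -2, 2], [-2, 2, -2, 2, 0, 0, 0, 0], [-2, -2, 2, 2, 0, 0, 0, 0], [2, 2, 2, 2, 0, 0, 0, 0], [0, 0, 0, 0, -2, 2, -2, 2], [0, 0, 0, 0, -2, -2, 2, 2], [0, 0, 0, 0, 2, 2, 2, 2]], [[-1, 1, 1, 1, -3, 1, 1, -1], [-1, 1, 1, -3, 1, 1, 1, -1], [-1, 1, -3, 1, 1, 1, 1, -1], [-1, -3, 1, 1, 1, 1, 1, -1], [3, 1, 1, 1, 1, 1, 1, -1], [1, -1, -1, -1, -1, 3, -1, 1], [1, -1, -1, -1, -1, -1, 3, 1], [-1, 1, 1, 1, 1, 1, 1, 3]], [[0, 0, 0, 0, -2, 2, 2, -2], [-2, 2, 2, -2, 0, 0, 0, 0], [-2, 2, -2, 2, 0, 0, 0, 0], [-2, -2, 2, 2, 0, 0, 0, 0], [2, 2, 2, 2, 0, 0, 0, 0], [0, 0, 0, 0, -2, 2, -2, 2], [0, 0, 0, 0, -2, -2, 2, 2], [0, 0, 0, 0, 2, 2, 2, 2]], [[0, 0, 0, 0, 2, -2, -2, 2], [2, -2, -2, 2, 0, 0, 0, 0], [-2, 2, -2, 2, 0, 0, 0, 0], [-2, -2, 2, 2, 0, 0, 0, 0], [2, 2, 2, 2, 0, 0, 0, 0], [0, 0, 0, 0, -2, 2, -2, 2], [0, 0, 0, 0, -2, -2, 2, 2], [0, 0, 0, 0, 2, 2, 2,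 2]], [[-2, 2, 2, -2, 0, 0, 0, 0], [0, 0, 0, 0, -2, 2, 2, -2], [-2, 2, -2, 2, 0, 0, 0, 0], [-2, -2, 2, 2, 0, 0, 0, 0], [2, 2, 2, 2, 0, 0, 0, 0], [0, 0, 0, 0, -2, 2, -2, 2], [0, 0, 0, 0, -2, -2, 2, 2], [0, 0, 0, 0, 2, 2, 2, 2]], [[-2, 2, 2, -2, 0, 0, 0, 0], [-2, 2, -2, 2, 0, 0, 0, 0], [0, 0, 0, 0, -2, 2, 2, -2], [-2, -2, 2, 2, 0, 0, 0, 0], [2, 2, 2, 2, 0, 0, 0, 0], [0, 0, 0, 0, -2, 2, -2, 2], [0, 0, 0, 0, -2, -2, 2, 2], [0, 0, 0, 0, 2, 2, 2, 2]], [[-2, 2, 2, -2, 0, 0, 0, 0], [-2, 2, -2, 2, 0, 0, 0, 0], [-2, -2, 2, 2, 0, 0, 0, 0], [0, 0, 0, 0, -2, 2, 2, -2], [2, 2, 2, 2, 0, 0, 0, 0], [0, 0, 0, 0, -2, 2, -2, 2], [0, 0, 0, 0, -2, -2, 2, 2], [0, 0, 0, 0, 2, 2, 2, 2]], [[-2, 2, 2, -2, 0, 0, 0, 0], [-2, 2, -2, 2, 0, 0, 0, 0], [-2, -2, 2, 2, 0, 0, 0, 0], [2, 2, 2, 2, 0, 0, 0, 0], [0, 0, 0, 0, -2, 2, 2, -2], [0, 0, 0, 0, -2, 2, -2, 2], [0, 0, 0, 0, -2, -2, 2, 2], [0, 0, 0, 0, 2, 2, 2, 2]]]"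

definition stp :: "(nat \<times> nat) list list" where "stp = [[(1, 0), (0, 0), (2, 3), (3, 3), (4, 3), (5, 3), (6, 3), (7, 3), (8, 3), (9, 3), (12, 0), (11, 3), (10, 0), (15, 0), (14, 3), (13, 0), (17, 0), (16, 0), (19, 0), (18, 0), (21, 0), (20, 0), (22, 6), (23, 6), (24, 6), (25, 6), (26, 6)], [(0, 2), (1, 2), (2, 2), (4, 0), (3, 0), (6, 0), (5, 0), (9, 0), (8, 5), (7, 0), (10, 5), (11, 5), (12, 5), (13, 5), (14, 5), (15, 5), (16, 5), (17, 5), (20, 0), (21, 0), (18, 0), (19, 0), (23, 0), (22, 0), (24, 3), (25, 3), (26, 3)], [(0, 3), (2, 0), (1, 0), (3, 4), (4, 4), (5, 4), (6, 4), (7, 4), (10, 0), (9, 4), (8, 0), (13, 0), (12, 3), (11, 0), (16, 0), (15, 3), (14, 0), (17, 3), (18, 6), (22, 0), (20, 6), (23, 0), (19, 0), (21, 0), (24, 5), (25, 5), (26, 5)], [(0, 4), (1, 4), (3, 0), (2, 0), (4, 2), (5, 5), (8, 0), (7, 5), (6, 0), (11, 0), (10, 4), (9, 0), (12, 4), (13, 4), (14, 6), (15, 4), (18, 0), (19, 0), (16, 0), (17, 0), (20, 5), (21, 5), (22, 3), (24, 0), (23, 0), (25, 4), (26, 4)], [(0, 5), (1, 5), (2, 5), (5, 0), (6, 0), (3, 0), (4, 0), (7, 6), (8, 2), (9, 6), (10, 2), (14, 0), (12, 2), (16, 0), (11, 0), (17, 0), (13, 0), (15, 0), (18, 4), (19,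 4), (20, 4), (21, 4), (22, 4), (23, 4), (25, 0), (24, 0), (26, 2)], [(0, 6), (1, 6), (2, 6), (3, 6), (4, 6), (7, 0), (9, 0), (5, 0), (11, 0), (6, 0), (13, 0), (8, 0), (15, 0), (10, 0), (14, 2), (12, 0), (16, 2), (17, 2), (18, 2), (19, 2), (20, 2), (21, 2), (22, 2), (23, 2), (24, 2), (26, 0), (25, 0)]]"

definition Rts :: "int list list" where "Rts = [[2, 2, 0, 0, 0, 0, 0, 0], [2, -2, 0, 0, 0, 0, 0, 0], [-2, -2, 0, 0, 0, 0, 0, 0], [-2, 2, 0, 0, 0, 0, 0, 0], [2, 0, 2, 0, 0, 0, 0, 0], [2, 0, -2, 0, 0, 0, 0, 0], [-2, 0, -2, 0, 0, 0, 0, 0], [-2, 0, 2, 0, 0, 0, 0, 0], [2, 0, 0, 2, 0, 0, 0, 0], [2, 0, 0, -2, 0, 0, 0, 0], [-2, 0, 0, -2, 0, 0, 0, 0], [-2, 0, 0, 2, 0, 0, 0, 0], [2, 0, 0, 0, 2, 0, 0, 0], [2, 0, 0, 0, -2, 0, 0, 0], [-2, 0, 0, 0, -2, 0, 0, 0], [-2, 0, 0, 0, 2, 0, 0, 0], [0, 2, 2, 0, 0, 0, 0, 0], [0, 2, -2, 0, 0, 0, 0, 0], [0, -2, -2, 0, 0, 0, 0, 0], [0, -2, 2, 0, 0, 0, 0, 0], [0, 2, 0, 2, 0, 0, 0, 0], [0, 2, 0, -2, 0, 0, 0, 0], [0, -2, 0, -2, 0, 0, 0, 0], [0, -2, 0,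 2, 0, 0, 0, 0], [0, 2, 0, 0, 2, 0, 0, 0], [0, 2, 0, 0, -2, 0, 0, 0], [0, -2, 0, 0, -2, 0, 0, 0], [0, -2, 0, 0, 2, 0, 0, 0], [0, 0, 2, 2, 0, 0, 0, 0], [0, 0, 2, -2, 0, 0, 0, 0], [0, 0, -2, -2, 0, 0, 0, 0], [0, 0, -2, 2, 0, 0, 0, 0], [0, 0, 2, 0, 2, 0, 0, 0], [0, 0, 2, 0, -2, 0, 0, 0], [0, 0, -2, 0, -2, 0, 0, 0], [0, 0, -2, 0, 2, 0, 0, 0], [0, 0, 0, 2, 2, 0, 0, 0], [0, 0, 0, 2, -2, 0, 0, 0], [0, 0, 0, -2, -2, 0, 0, 0], [0, 0, 0, -2, 2, 0, 0, 0], [1, 1, 1, 1, 1, -1, -1, 1], [-1, -1, -1, -1, -1, 1, 1, -1], [1, 1, 1, -1, -1, -1, -1, 1], [-1, -1, -1, 1, 1, 1, 1, -1], [1, 1, -1, 1, -1, -1, -1, 1], [-1, -1, 1, -1, 1, 1, 1, -1], [1, 1, -1, -1, 1, -1, -1, 1], [-1, -1, 1, 1, -1, 1, 1, -1], [1, -1, 1, 1, -1, -1, -1, 1], [-1, 1, -1, -1, 1, 1, 1, -1], [1, -1, 1, -1, 1, -1, -1, 1], [-1, 1, -1, 1, -1, 1, 1, -1], [1, -1, -1, 1, 1, -1, -1, 1], [-1, 1, 1, -1, -1, 1, 1, -1], [1, -1, -1, -1, -1, -1, -1, 1], [-1, 1, 1, 1, 1, 1, 1, -1], [-1, 1, 1,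 1, -1, -1, -1, 1], [1, -1, -1, -1, 1, 1, 1, -1], [-1, 1, 1, -1, 1, -1, -1, 1], [1, -1, -1, 1, -1, 1, 1, -1], [-1, 1, -1, 1, 1, -1, -1, 1], [1, -1, 1, -1, -1, 1, 1, -1], [-1, 1, -1, -1, -1, -1, -1, 1], [1, -1, 1, 1, 1, 1, 1, -1], [-1, -1, 1, 1, 1, -1, -1, 1], [1, 1, -1, -1, -1, 1, 1, -1], [-1, -1, 1, -1, -1, -1, -1, 1], [1, 1, -1, 1, 1, 1, 1, -1], [-1, -1, -1, 1, -1, -1, -1, 1], [1, 1, 1, -1, 1, 1, 1, -1], [-1, -1, -1, -1, 1, -1, -1, 1], [1, 1, 1, 1, -1, 1, 1, -1]]"

definition sr :: "nat \<Rightarrow> int list" where "sr i = [[1, -1, -1, -1, -1, -1, -1, 1], [2, 2, 0, 0, 0, 0, 0, 0], [-2, 2, 0, 0, 0, 0, 0, 0], [0, -2, 2, 0, 0, 0, 0, 0], [0, 0, -2, 2, 0, 0, 0, 0], [0, 0, 0, -2, 2, 0, 0, 0]] ! (i - 1)"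

definition stepok :: "nat \<Rightarrow> nat \<Rightarrow> bool" where
 "stepok i n = (case stp!(i-1)!n of (m, j) \<Rightarrow> m < 27 \<and> (if j = 0 then meq 32 (imm (rm (sr i)) (Mats!n)) 4 (Mats!m)
    else 2 \<le> j \<and> j \<le> 6 \<and> meq 32 (imm (rm (sr i)) (Mats!n)) 32 (imm (Mats!m) (rm (sr j)))))"

lemma steps_ok: "list_all (\<lambda>i. list_all (\<lambda>n. stepok i n) [0..<27]) [1..<7]"
  by code_simp


definition chain :: "(nat \<times> nat \<times> nat \<times> nat) list" where "chain = [(54, 1, 0, 0), (0, 2, 0, 0), (3, 3, 0, 0), (19, 4, 0, 0), (31, 5, 0, 0), (39, 6, 0, 0), (55, 1, 54, 1), (62, 3, 54, 1), (2, 2, 0, 1), (4, 4, 0, 1), (1, 3, 3, 1), (7, 4, 3, 1), (17, 4, 19, 1), (23, 5, 19, 1), (29, 5, 31, 1), (35, 6, 31, 1), (37, 6, 39, 1), (63, 3, 55, 1), (66, 4, 62, 1), (6, 4, 2, 1), (16, 3, 4, 1), (8, 5, 4, 1), (5, 4, 1, 1), (11, 5, 7, 1), (21, 5, 17, 1), (27, 6, 23, 1), (33, 6, 29, 1), (67, 4, 63, 1), (42, 2, 66, 1), (68, 5, 66, 1), (18, 3, 6, 1), (10, 5, 6, 1), (20, 5, 16, 1), (12, 6, 8, 1), (9, 5, 5, 1), (15, 6, 11, 1), (25, 6, 21, 1), (43, 2, 67, 1), (69, 5, 67, 1), (44, 5, 42, 1), (70, 6, 68, 1), (22, 5, 18,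 1), (14, 6, 10, 1), (28, 4, 20, 1), (24, 6, 20, 1), (13, 6, 9, 1), (45, 5, 43, 1), (71, 6, 69, 1), (48, 4, 44, 1), (46, 6, 44, 1), (30, 4, 22, 1), (26, 6, 22, 1), (32, 6, 28, 1), (49, 4, 45, 1), (47, 6, 45, 1), (56, 3, 48, 1), (50, 6, 48, 1), (34, 6, 30, 1), (36, 5, 32, 1), (57, 3, 49, 1), (51, 6, 49, 1), (58, 6, 56, 1), (52, 5, 50, 1), (38, 5, 34, 1), (59, 6, 57, 1), (53, 5, 51, 1), (60, 5, 58, 1), (61, 5, 59, 1), (64, 4, 60, 1), (65, 4, 61, 1), (40, 2, 64, 1), (41, 2, 65, 1)]"

definition ptab :: "(int \<times> nat list) list" where "ptab = [(1, [0, 1, 0, 0, 0, 0]), (-1, [0, 0, 1, 0, 0, 0]), (-1, [0, 1, 0, 0, 0, 0]), (1, [0, 0, 1, 0, 0, 0]), (1, [0, 1, 0, 1, 0, 0]), (-1, [0, 0, 1, 1, 0, 0]), (-1, [0, 1, 0, 1, 0, 0]), (1, [0, 0, 1, 1, 0, 0]), (1, [0, 1, 0, 1, 1, 0]), (-1, [0, 0, 1, 1, 1, 0]), (-1, [0, 1, 0, 1, 1, 0]), (1, [0, 0, 1, 1, 1, 0]), (1, [0, 1, 0, 1, 1, 1]), (-1, [0, 0, 1, 1, 1, 1]), (-1, [0, 1, 0, 1, 1, 1]), (1, [0, 0, 1, 1, 1, 1]), (1, [0, 1, 1, 1, 0, 0]), (-1, [0, 0, 0, 1, 0, 0]), (-1,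 [0, 1, 1, 1, 0, 0]), (1, [0, 0, 0, 1, 0, 0]), (1, [0, 1, 1, 1, 1, 0]), (-1, [0, 0, 0, 1, 1, 0]), (-1, [0, 1, 1, 1, 1, 0]), (1, [0, 0, 0, 1, 1, 0]), (1, [0, 1, 1, 1, 1, 1]), (-1, [0, 0, 0, 1, 1, 1]), (-1, [0, 1, 1, 1, 1, 1]), (1, [0, 0, 0, 1, 1, 1]), (1, [0, 1, 1, 2, 1, 0]), (-1, [0, 0, 0, 0, 1, 0]), (-1, [0, 1, 1, 2, 1, 0]), (1, [0, 0, 0, 0, 1, 0]), (1, [0, 1, 1, 2, 1, 1]), (-1, [0, 0, 0, 0, 1, 1]), (-1, [0, 1, 1, 2, 1, 1]), (1, [0, 0, 0, 0, 1, 1]), (1, [0, 1, 1, 2, 2, 1]), (-1, [0, 0, 0, 0, 0, 1]), (-1, [0, 1, 1, 2, 2, 1]), (1, [0, 0, 0, 0, 0, 1]), (1, [1, 2, 2, 3, 2, 1]), (-1, [1, 2, 2, 3, 2, 1]), (1, [1, 1, 1, 1, 0, 0]), (-1, [1, 1, 1, 1, 0, 0]), (1, [1, 1, 1, 1, 1, 0]), (-1, [1, 1, 1, 1, 1, 0]), (1, [1, 1, 1, 1, 1, 1]), (-1, [1, 1, 1, 1, 1, 1]), (1, [1, 1, 1, 2, 1, 0]), (-1, [1, 1, 1, 2, 1, 0]), (1, [1, 1, 1, 2, 1, 1]), (-1, [1, 1, 1, 2, 1, 1]), (1, [1, 1, 1, 2, 2, 1]), (-1, [1, 1, 1, 2,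 2, 1]), (1, [1, 0, 0, 0, 0, 0]), (-1, [1, 0, 0, 0, 0, 0]), (1, [1, 1, 2, 2, 1, 0]), (-1, [1, 1, 2, 2, 1, 0]), (1, [1, 1, 2, 2, 1, 1]), (-1, [1, 1, 2, 2, 1, 1]), (1, [1, 1, 2, 2, 2, 1]), (-1, [1, 1, 2, 2, 2, 1]), (1, [1, 0, 1, 0, 0, 0]), (-1, [1, 0, 1, 0, 0, 0]), (1, [1, 1, 2, 3, 2, 1]), (-1, [1, 1, 2, 3, 2, 1]), (1, [1, 0, 1, 1, 0, 0]), (-1, [1, 0, 1, 1, 0, 0]), (1, [1, 0, 1, 1, 1, 0]), (-1, [1, 0, 1, 1, 1, 0]), (1, [1, 0, 1, 1, 1, 1]), (-1, [1, 0, 1, 1, 1, 1])]"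

lemma k8: "k \<in> {1..8::nat} \<Longrightarrow> k = 1 \<or> k = 2 \<or> k = 3 \<or> k = 4 \<or> k = 5 \<or> k = 6 \<or> k = 7 \<or> k = 8"
  by auto

lemma i6: "i \<in> {1..6::nat} \<Longrightarrow> i = 1 \<or> i = 2 \<or> i = 3 \<or> i = 4 \<or> i = 5 \<or> i = 6"
  by auto

lemma vd_ext: assumes "\<And>k. k \<in> {1..8} \<Longrightarrow> v k = vd d x k" "\<And>k. k \<notin> {1..8} \<Longrightarrow> v k = 0"
  shows "v = vd d x"
proof
  fix k show "v k = vd d x k" using assms by (cases "k \<in> {1..8}") (auto simp: vd_def)
qed

definition t0 :: "int list" where "t0 = [0,0,0,0,0,-4,-4,4]"

lemma tbar_vd: "tbar = vd 6 t0"
proof (rule vd_ext)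
  fix k :: nat assume "k \<in> {1..8}"
  then show "tbar k = vd 6 t0 k" by (elim k8[elim_format]) (auto simp: tbar_def e_def vd_def t0_def)
qed (auto simp: tbar_def e_def)

lemma sroot_vd1: "simple_root 1 = vd 2 (sr 1)"
proof (rule vd_ext)
  fix k :: nat assume k: "k \<in> {1..8}"
  show "simple_root 1 k = vd 2 (sr 1) k"
    using k8[OF k] by (elim disjE; simp add: simple_root_def e_def vd_def sr_def)
qed (auto simp: simple_root_def e_def)

lemma sroot_vd2: "simple_root 2 = vd 2 (sr 2)"
proof (rule vd_ext)
  fix k :: nat assume k: "k \<in> {1..8}"
  show "simple_root 2 k = vd 2 (sr 2) k"
    using k8[OF k] by (elim disjE; simp add: simple_root_def e_def vd_def sr_def)
qed (auto simp: simple_root_def e_def)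

lemma sroot_vd3: "simple_root 3 = vd 2 (sr 3)"
proof (rule vd_ext)
  fix k :: nat assume k: "k \<in> {1..8}"
  show "simple_root 3 k = vd 2 (sr 3) k"
    using k8[OF k] by (elim disjE; simp add: simple_root_def e_def vd_def sr_def)
qed (auto simp: simple_root_def e_def)

lemma sroot_vd4: "simple_root 4 = vd 2 (sr 4)"
proof (rule vd_ext)
  fix k :: nat assume k: "k \<in> {1..8}"
  show "simple_root 4 k = vd 2 (sr 4) k"
    using k8[OF k] by (elim disjE; simp add: simple_root_def e_def vd_def sr_def)
qed (auto simp: simple_root_def e_def)

lemma sroot_vd5: "simple_root 5 = vd 2 (sr 5)"
proof (rule vd_ext)
  fix k :: nat assume k: "k \<in> {1..8}"
  show "simple_root 5 k = vd 2 (sr 5) k"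
    using k8[OF k] by (elim disjE; simp add: simple_root_def e_def vd_def sr_def)
qed (auto simp: simple_root_def e_def)

lemma sroot_vd6: "simple_root 6 = vd 2 (sr 6)"
proof (rule vd_ext)
  fix k :: nat assume k: "k \<in> {1..8}"
  show "simple_root 6 k = vd 2 (sr 6) k"
    using k8[OF k] by (elim disjE; simp add: simple_root_def e_def vd_def sr_def)
qed (auto simp: simple_root_def e_def)

lemma sroot_vd: assumes "i \<in> {1..6}" shows "simple_root i = vd 2 (sr i)"
  using i6[OF assms] sroot_vd1 sroot_vd2 sroot_vd3 sroot_vd4 sroot_vd5 sroot_vd6 by auto

definition dot :: "int list \<Rightarrow> int list \<Rightarrow> int" where "dot x y = (\<Sum>k<8. x!k * y!k)"

lemma ip_vdvd: "ip (vd d x) (vd d' y) = of_int (dot x y) / (of_int d * of_int d')"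
proof -
  have "ip (vd d x) (vd d' y) = (\<Sum>j\<in>{1..8}. of_int (x!(j-1) * y!(j-1))) / (of_int d * of_int d')"
    unfolding ip_def by (simp add: vd_def sum_divide_distrib)
  also have "(\<Sum>j\<in>{1..8}. real_of_int (x!(j-1) * y!(j-1))) = of_int (dot x y)"
    unfolding dot_def of_int_sum by (rule sum18_shift)
  finally show ?thesis .
qed

lemma sr_facts: "list_all (\<lambda>i. dot (sr i) (sr i) = 8) [1..<7]" "list_all (\<lambda>i. dot t0 (sr i) = 0) [2..<7]"
  by code_simp+

lemma sr_norm: "i \<in> {1..6} \<Longrightarrow> dot (sr i) (sr i) = 8"
  using sr_facts(1) by (auto simp: list_all_iff)

lemma srefl: assumes "i \<in> {1..6}" shows "refl (simple_root i) = mp 8 (rm (sr i))"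
  using refl_vd[of 2 "sr i"] sr_norm[OF assms] unfolding sroot_vd[OF assms] dot_def by simp

lemma sroot_ip: "i \<in> {1..6} \<Longrightarrow> ip (simple_root i) (simple_root i) = 2"
  by (simp add: sroot_vd ip_vdvd sr_norm)

lemma srefl_invol: "i \<in> {1..6} \<Longrightarrow> refl (simple_root i) \<circ> refl (simple_root i) = id"
  by (rule ext) (simp add: refl_refl sroot_ip)

lemma refl_fix: "ip v a = 0 \<Longrightarrow> refl a v = v"
  by (simp add: refl_def fun_eq_iff)

lemma srefl_tbar: assumes "i \<in> {2..6}" shows "refl (simple_root i) tbar = tbar"
proof (rule refl_fix)
  have "i \<in> set [2..<7]" using assms by auto
  then have "dot t0 (sr i) = 0" using sr_facts(2) by (simp only: list_all_iff)
  then show "ip tbar (simple_root i) = 0" using assms by (simp add: tbar_vd sroot_vd ip_vdvd)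
qed

lemma WD5_comp: "u1 \<in> WD5 \<Longrightarrow> u2 \<in> WD5 \<Longrightarrow> u1 \<circ> u2 \<in> WD5"
  by (induction rule: WD5.induct) (auto simp: o_assoc[symmetric] intro: WD5.intros)

lemma WE6_comp: "u1 \<in> WE6 \<Longrightarrow> u2 \<in> WE6 \<Longrightarrow> u1 \<circ> u2 \<in> WE6"
  by (induction rule: WE6.induct) (auto simp: o_assoc[symmetric] intro: WE6.intros)

lemma WD5_gen: "i \<in> {2..6} \<Longrightarrow> refl (simple_root i) \<in> WD5"
  using WD5_step[OF WD5_id] by simp

lemma WE6_gen: "i \<in> {1..6} \<Longrightarrow> refl (simple_root i) \<in> WE6"
  using WE6_step[OF WE6_id] by simp

lemma WD5_tbar: "u \<in> WD5 \<Longrightarrow> u tbar = tbar"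
  by (induction rule: WD5.induct) (auto simp: srefl_tbar)

lemma WD5_inv: "u \<in> WD5 \<Longrightarrow> \<exists>v\<in>WD5. u \<circ> v = id \<and> v \<circ> u = id"
proof (induction rule: WD5.induct)
  case WD5_id then show ?case by (rule bexI[of _ id]) (auto intro: WD5.intros)
next
  case (WD5_step w i)
  then obtain v where v: "v \<in> WD5" "w \<circ> v = id" "v \<circ> w = id" by blast
  have ii: "i \<in> {1..6}" using WD5_step by auto
  have "v \<circ> refl (simple_root i) \<in> WD5" using v(1) WD5_comp WD5_gen WD5_step by blast
  moreover have "refl (simple_root i) \<circ> w \<circ> (v \<circ> refl (simple_root i)) = id"
    using v srefl_invol[OF ii] by (simp add: o_assoc) (metis comp_assoc id_comp)
  moreover have "(v \<circ> refl (simple_root i)) \<circ> (refl (simple_root i) \<circ> w) = id"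
    using v srefl_invol[OF ii] by (metis comp_assoc id_comp)
  ultimately show ?case by blast
qed




definition idm :: "int list list" where
  "idm = map (\<lambda>k. map (\<lambda>j. if k = j then 1 else 0) [0..<8]) [0..<8]"

lemma mp_idm: "mp 1 idm = id"
proof (intro ext)
  fix v k
  show "mp 1 idm v k = id v k"
  proof (cases "k \<in> {1..8}")
    case True
    have e: "\<And>j. j \<in> {1..8} \<Longrightarrow> idm!(k-1)!(j-1) = (if k = j then 1 else 0)"
      using True by (auto simp: idm_def)
    have "mp 1 idm v k = (\<Sum>j\<in>{1..8}. if k = j then v j else 0)"
      unfolding mp_def using True
    proof (simp only: if_True, intro sum.cong refl)
      fix j assume j: "j \<in> {1..8::nat}"
      show "real_of_int (idm ! (k - 1) ! (j - 1)) / real_of_int 1 * v j = (if k = j then v j else 0)"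
        unfolding e[OF j] by simp
    qed
    also have "\<dots> = v k" using True by (subst sum.delta') auto
    finally show ?thesis by simp
  qed (auto simp: mp_def)
qed

lemma G0_meq: "meq 4 (Mats!0) 1 idm" by code_simp

lemma G0: "mp 4 (Mats!0) = id"
  using mp_eq[OF _ _ G0_meq] mp_idm by simp

lemma stepok_i: "i \<in> {1..6} \<Longrightarrow> n < 27 \<Longrightarrow> stepok i n"
proof -
  assume a: "i \<in> {1..6}" "n < 27"
  then have "i \<in> set [1..<7]" "n \<in> set [0..<27]" by auto
  then show ?thesis using steps_ok by (simp only: list_all_iff)
qed

lemma step: assumes i: "i \<in> {1..6}" and n: "n < 27"
  shows "\<exists>m<27. \<exists>u\<in>WD5. refl (simple_root i) \<circ> mp 4 (Mats!n) = mp 4 (Mats!m) \<circ> u"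
proof -
  obtain m j where mj: "stp!(i-1)!n = (m, j)" by fastforce
  have ok: "stepok i n" using stepok_i[OF i n] .
  have c: "refl (simple_root i) \<circ> mp 4 (Mats!n) = mp 32 (imm (rm (sr i)) (Mats!n))"
    using mp_comp[of 8 4 "rm (sr i)" "Mats!n"] srefl[OF i] by simp
  show ?thesis
  proof (cases "j = 0")
    case True
    then have "m < 27" "meq 32 (imm (rm (sr i)) (Mats!n)) 4 (Mats!m)" using ok mj by (auto simp: stepok_def)
    moreover have "mp 4 (Mats!m) \<circ> id = mp 4 (Mats!m)" by simp
    ultimately have "refl (simple_root i) \<circ> mp 4 (Mats!n) = mp 4 (Mats!m) \<circ> id"
      using c mp_eq[of 32 4] by simp
    then show ?thesis using \<open>m < 27\<close> WD5_id by blast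
  next
    case False
    then have h: "m < 27" "j \<in> {2..6}" "meq 32 (imm (rm (sr i)) (Mats!n)) 32 (imm (Mats!m) (rm (sr j)))"
      using ok mj by (auto simp: stepok_def)
    have j: "j \<in> {1..6}" using h by auto
    have "refl (simple_root i) \<circ> mp 4 (Mats!n) = mp 32 (imm (Mats!m) (rm (sr j)))"
      using c mp_eq[OF _ _ h(3)] by simp
    also have "\<dots> = mp 4 (Mats!m) \<circ> refl (simple_root j)"
      using mp_comp[of 4 8 "Mats!m" "rm (sr j)"] srefl[OF j] by simp
    finally show ?thesis using h WD5_gen[OF h(2)] by blast
  qed
qed

lemma WE6_inv: "w \<in> WE6 \<Longrightarrow> \<exists>n<27. \<exists>u\<in>WD5. w = mp 4 (Mats!n) \<circ> u"
proof (induction rule: WE6.induct)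
  case WE6_id
  show ?case
  proof (intro exI[of _ "0::nat"] conjI)
    show "0 < (27::nat)" by simp
    show "\<exists>u\<in>WD5. id = mp 4 (Mats!0) \<circ> u" by (rule bexI[OF _ WD5_id]) (simp only: G0 comp_id)
  qed
next
  case (WE6_step w i)
  then obtain n u where nu: "n < 27" "u \<in> WD5" "w = mp 4 (Mats!n) \<circ> u" by blast
  obtain m u' where mu: "m < 27" "u' \<in> WD5" "refl (simple_root i) \<circ> mp 4 (Mats!n) = mp 4 (Mats!m) \<circ> u'"
    using step[OF WE6_step(2) nu(1)] by blast
  have "refl (simple_root i) \<circ> w = mp 4 (Mats!m) \<circ> (u' \<circ> u)"
    using nu(3) mu(3) by (metis comp_assoc)
  then show ?case using mu WD5_comp[OF mu(2) nu(2)] by blast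
qed

definition wv :: "nat \<Rightarrow> int list" where "wv n = imv (Mats!n) t0"

definition Wts :: "int list list" where "Wts = [[0, 0, 0, 0, 0, -16, -16, 16], [-12, 12, 12, 12, 12, -4, -4, 4], [12, -12, 12, 12, 12, -4, -4, 4], [12, 12, -12, 12, 12, -4, -4, 4], [-12, -12, -12, 12, 12, -4, -4, 4], [12, 12, 12, -12, 12, -4, -4, 4], [-12, -12, 12, -12, 12, -4, -4, 4], [12, 12, 12, 12, -12, -4, -4, 4], [-12, 12, -12, -12, 12, -4, -4, 4], [-12, -12, 12, 12, -12, -4, -4, 4], [12, -12, -12, -12, 12, -4, -4, 4], [-12, 12, -12, 12, -12, -4, -4, 4], [0, 0, 0, 0, 24, 8, 8, -8], [12, -12, -12, 12, -12, -4, -4, 4], [-12, 12, 12, -12, -12, -4, -4, 4], [0, 0, 0, 24, 0, 8, 8, -8], [12, -12, 12, -12, -12, -4, -4, 4], [0, 0, 24, 0, 0, 8, 8, -8], [12, 12, -12, -12, -12, -4, -4, 4], [0, 24, 0, 0, 0, 8, 8, -8], [-12, -12, -12, -12, -12, -4, -4, 4], [-24, 0, 0, 0, 0, 8, 8, -8], [24, 0, 0, 0, 0, 8, 8, -8], [0, -24, 0, 0, 0, 8, 8, -8], [0, 0, -24, 0, 0, 8, 8, -8], [0, 0, 0, -24, 0, 8, 8, -8], [0, 0, 0, 0, -24, 8, 8, -8]]"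

lemma wv_Wts: "map wv [0..<27] = Wts" unfolding wv_def by code_simp

lemma wvW: "n < 27 \<Longrightarrow> wv n = Wts ! n"
  using wv_Wts by (metis (no_types, lifting) add_0 diff_zero length_upt nth_map nth_upt)

lemma Gt: "mp 4 (Mats!n) tbar = vd 24 (wv n)"
  unfolding tbar_vd wv_def using mp_vd[of 4 6] by simp

lemma wv_distinct: "distinct (map wv [0..<27])" unfolding wv_Wts by code_simp

lemma vd_inj: assumes "vd d x = vd d y" "d \<noteq> 0" "length x = 8" "length y = 8" shows "x = y"
proof (rule nth_equalityI)
  show "length x = length y" using assms by simp
  fix k assume k: "k < length x"
  have "vd d x (Suc k) = vd d y (Suc k)" using assms(1) by simp
  then show "x!k = y!k" using k assms by (simp add: vd_def)
qed

lemma wv_inj: assumes "n1 < 27" "n2 < 27" "vd 24 (wv n1) = vd 24 (wv n2)" shows "n1 = n2"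
proof -
  have "wv n1 = wv n2" using vd_inj[OF assms(3)] by (simp add: wv_def imv_def)
  then show ?thesis using wv_distinct assms nth_eq_iff_index_eq[of "map wv [0..<27]" n1 n2] by simp
qed

lemma SAME: assumes "w1 \<in> WE6" "w2 \<in> WE6" "w1 tbar = w2 tbar" shows "\<exists>v\<in>WD5. w1 = w2 \<circ> v"
proof -
  obtain n1 u1 where 1: "n1 < 27" "u1 \<in> WD5" "w1 = mp 4 (Mats!n1) \<circ> u1" using WE6_inv[OF assms(1)] by blast
  obtain n2 u2 where 2: "n2 < 27" "u2 \<in> WD5" "w2 = mp 4 (Mats!n2) \<circ> u2" using WE6_inv[OF assms(2)] by blast
  have "vd 24 (wv n1) = vd 24 (wv n2)" using assms(3) 1 2 WD5_tbar Gt by simp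
  then have n: "n1 = n2" using wv_inj 1 2 by blast
  obtain v2 where v2: "v2 \<in> WD5" "u2 \<circ> v2 = id" "v2 \<circ> u2 = id" using WD5_inv[OF 2(2)] by blast
  have "w1 = w2 \<circ> (v2 \<circ> u1)" using 1(3) 2(3) n v2(2) by (metis comp_assoc id_comp)
  then show ?thesis using WD5_comp[OF v2(1) 1(2)] by blast
qed

lemma Lambda_wv: "l \<in> Lambda \<Longrightarrow> \<exists>n<27. l = vd 24 (wv n)"
proof -
  assume "l \<in> Lambda"
  then obtain w where w: "w \<in> WE6" "l = w tbar" unfolding Lambda_def by blast
  obtain n u where "n < 27" "u \<in> WD5" "w = mp 4 (Mats!n) \<circ> u" using WE6_inv[OF w(1)] by blast
  then have "l = vd 24 (wv n)" using w(2) WD5_tbar Gt by simp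
  then show ?thesis using \<open>n < 27\<close> by blast
qed

lemma tabs0: "list_all (\<lambda>w. list_all (\<lambda>r. dot w r \<in> {-48,0,48}) Rts) Wts"
   "list_all (\<lambda>r. dot r r = 8) Rts"
   "list_all (\<lambda>w. dot w w = 768) Wts"
  by code_simp+

lemma tabs: "list_all (\<lambda>n. list_all (\<lambda>r. dot (wv n) r \<in> {-48,0,48}) Rts) [0..<27]"
   "list_all (\<lambda>r. dot r r = 8) Rts"
   "list_all (\<lambda>n. dot (wv n) (wv n) = 768) [0..<27]"
  using tabs0 unfolding wv_Wts[symmetric] by (simp_all add: list_all_iff)

lemma ip_wr: assumes "n < 27" "r \<in> set Rts"
  shows "ip (vd 24 (wv n)) (vd 2 r) \<in> {-1, 0, 1}"
proof -
  have "n \<in> set [0..<27]" using assms by simp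
  then have "dot (wv n) r \<in> {-48,0,48}" using tabs(1) assms(2) by (simp only: list_all_iff)
  then show ?thesis by (auto simp: ip_vdvd)
qed

lemma ip_rr: "r \<in> set Rts \<Longrightarrow> ip (vd 2 r) (vd 2 r) = 2"
  using tabs(2) by (auto simp: ip_vdvd list_all_iff)

lemma ip_ww: assumes "n < 27" shows "ip (vd 24 (wv n)) (vd 24 (wv n)) = 4/3"
proof -
  have "n \<in> set [0..<27]" using assms by simp
  then have "dot (wv n) (wv n) = 768" using tabs(3) by (simp only: list_all_iff)
  then show ?thesis by (simp add: ip_vdvd)
qed






lemma i5: "i \<in> {1..5::nat} \<Longrightarrow> i = 1 \<or> i = 2 \<or> i = 3 \<or> i = 4 \<or> i = 5"
  by auto

lemma upt8: "[0..<8] = [0,1,2,3,4,5,6,7::nat]" by (simp add: upt_rec)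

lemma sum_apply_fun: "(sum F A) k = (\<Sum>i\<in>A. F i k)" for F :: "nat \<Rightarrow> vec"
  by (induct A rule: infinite_finite_induct) auto

lemma sum_shift_gen: "(\<Sum>j\<in>{1..n::nat}. f (j - 1)) = (\<Sum>j<n. f j)"
  by (induct n) (simp_all add: sum.lessThan_Suc)

lemma prod5: "(\<Prod>k\<in>{1..5::nat}. f k) = f 1 * f 2 * f 3 * f 4 * (f 5 :: real)"
  by (simp add: numeral_eq_Suc prod.atLeast_Suc_atMost mult.assoc)

lemma sum5v: "(\<Sum>k\<in>{1..5::nat}. f k) = f 1 + f 2 + f 3 + f 4 + (f 5 :: vec)"
  by (simp add: numeral_eq_Suc sum.atLeast_Suc_atMost add.assoc)

lemma smul_vd: "of_int s *\<^sub>v vd d r = vd d (map (\<lambda>x. s * x) r)" if "length r = 8"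
proof (rule ext)
  fix k show "(of_int s *\<^sub>v vd d r) k = vd d (map (\<lambda>x. s * x) r) k"
    using that by (auto simp: vd_def)
qed

definition LA :: "int \<Rightarrow> nat \<Rightarrow> nat \<Rightarrow> int list" where
  "LA s' i j = map (\<lambda>k. 2 * s' * ((if Suc k = i then 1 else 0) + (if Suc k = j then 1 else 0))) [0..<8]"
definition LB :: "int \<Rightarrow> nat \<Rightarrow> nat \<Rightarrow> int list" where
  "LB s' i j = map (\<lambda>k. 2 * s' * ((if Suc k = i then 1 else 0) - (if Suc k = j then 1 else 0))) [0..<8]"

lemma LAB_ok: "list_all (\<lambda>s'. list_all (\<lambda>i. list_all (\<lambda>j. i < j \<longrightarrow> LA s' i j \<in> set Rts \<and> LB s' i j \<in> set Rts) [1..<6]) [1..<6]) [1,-1]"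
  by code_simp

lemma LC_ok: "list_all (\<lambda>s'. list_all (\<lambda>m1. list_all (\<lambda>m2. list_all (\<lambda>m3. list_all (\<lambda>m4. list_all (\<lambda>m5.
   m1 * m2 * m3 * m4 * m5 = 1 \<longrightarrow> [s' * m1, s' * m2, s' * m3, s' * m4, s' * m5, -s', -s', s'] \<in> set Rts)
   [1,-1]) [1,-1]) [1,-1]) [1,-1]) [1,-1]) [1,-1::int]"
  by code_simp

lemma PhiA: assumes "s \<in> {1, -1}" "1 \<le> i" "i < j" "j \<le> (5::nat)"
  shows "s *\<^sub>v (e i + e j) \<in> vd 2 ` set Rts"
proof -
  obtain s' :: int where s': "s = of_int s'" "s' \<in> {1, -1}" using assms(1) by (metis insert_iff of_int_1 of_int_minus singletonD)
  define L where "L = map (\<lambda>k. 2 * s' * ((if Suc k = i then 1 else 0) + (if Suc k = j then 1 else 0))) [0..<8]"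
  have "s *\<^sub>v (e i + e j) = vd 2 L"
  proof (rule vd_ext)
    fix k :: nat assume k: "k \<in> {1..8}"
    then have "L ! (k - 1) = 2 * s' * ((if k = i then 1 else 0) + (if k = j then 1 else 0))"
      by (auto simp: L_def)
    then show "(s *\<^sub>v (e i + e j)) k = vd 2 L k" using k s' by (simp add: vd_def e_def)
  next
    fix k :: nat assume "k \<notin> {1..8}" then show "(s *\<^sub>v (e i + e j)) k = 0" using assms by (auto simp: e_def)
  qed
  moreover have "L \<in> set Rts"
  proof -
    have "i \<in> set [1..<6]" "j \<in> set [1..<6]" "s' \<in> set [1,-1]" using assms s'(2) by auto
    then show ?thesis using assms(3) LAB_ok unfolding L_def LA_def[symmetric] list_all_iff by blast
  qed
  ultimately show ?thesis by blast
qed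

lemma PhiB: assumes "s \<in> {1, -1}" "1 \<le> i" "i < j" "j \<le> (5::nat)"
  shows "s *\<^sub>v (e i - e j) \<in> vd 2 ` set Rts"
proof -
  obtain s' :: int where s': "s = of_int s'" "s' \<in> {1, -1}" using assms(1) by (metis insert_iff of_int_1 of_int_minus singletonD)
  define L where "L = map (\<lambda>k. 2 * s' * ((if Suc k = i then 1 else 0) - (if Suc k = j then 1 else 0))) [0..<8]"
  have "s *\<^sub>v (e i - e j) = vd 2 L"
  proof (rule vd_ext)
    fix k :: nat assume k: "k \<in> {1..8}"
    then have "L ! (k - 1) = 2 * s' * ((if k = i then 1 else 0) - (if k = j then 1 else 0))"
      by (auto simp: L_def)
    then show "(s *\<^sub>v (e i - e j)) k = vd 2 L k" using k s' by (simp add: vd_def e_def)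
  next
    fix k :: nat assume "k \<notin> {1..8}" then show "(s *\<^sub>v (e i - e j)) k = 0" using assms by (auto simp: e_def)
  qed
  moreover have "L \<in> set Rts"
  proof -
    have "i \<in> set [1..<6]" "j \<in> set [1..<6]" "s' \<in> set [1,-1]" using assms s'(2) by auto
    then show ?thesis using assms(3) LAB_ok unfolding L_def LB_def[symmetric] list_all_iff by blast
  qed
  ultimately show ?thesis by blast
qed

lemma PhiC: assumes "s \<in> {1, -1}" "\<forall>k\<in>{1..5}. mu k \<in> {1, -1}" "(\<Prod>k\<in>{1..5}. mu k) = (1::real)"
  shows "s *\<^sub>v ((1/2) *\<^sub>v ((\<Sum>k\<in>{1..5}. mu k *\<^sub>v e k) + e 8 - e 7 - e 6)) \<in> vd 2 ` set Rts"
proof -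
  obtain s' :: int where s': "s = of_int s'" "s' \<in> {1, -1}" using assms(1) by (metis insert_iff of_int_1 of_int_minus singletonD)
  define m :: "nat \<Rightarrow> int" where "m k = (if mu k = 1 then 1 else -1)" for k
  have mu: "\<And>k. k \<in> {1..5} \<Longrightarrow> mu k = of_int (m k)" using assms(2) by (auto simp: m_def)
  have m: "\<And>k. m k \<in> {1, -1}" by (simp add: m_def)
  define L where "L = [s' * m 1, s' * m 2, s' * m 3, s' * m 4, s' * m 5, -s', -s', s']"
  have "s *\<^sub>v ((1/2) *\<^sub>v ((\<Sum>k\<in>{1..5}. mu k *\<^sub>v e k) + e 8 - e 7 - e 6)) = vd 2 L"
  proof (rule vd_ext)
    fix k :: nat assume k: "k \<in> {1..8}"
    show "(s *\<^sub>v ((1/2) *\<^sub>v ((\<Sum>k\<in>{1..5}. mu k *\<^sub>v e k) + e 8 - e 7 - e 6))) k = vd 2 L k"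
    proof -
      have sk: "(\<Sum>k\<in>{1..5}. mu k *\<^sub>v e k) k = (if k \<le> 5 then of_int (m k) else 0)"
      proof -
        have "(\<Sum>k\<in>{1..5}. mu k *\<^sub>v e k) k = (\<Sum>k'\<in>{1..5}. if k' = k then mu k' else 0)"
          unfolding sum_apply_fun by (rule sum.cong) (auto simp: e_def)
        also have "\<dots> = (if k \<le> 5 then of_int (m k) else 0)" using k mu by (subst sum.delta) auto
        finally show ?thesis .
      qed
      show ?thesis unfolding smul_apply plus_fun_apply minus_apply sk
        using k8[OF k] s' by (elim disjE; simp add: vd_def e_def L_def)
    qed
  next
    fix k :: nat assume "k \<notin> {1..8}"
    then show "(s *\<^sub>v ((1/2) *\<^sub>v ((\<Sum>k\<in>{1..5}. mu k *\<^sub>v e k) + e 8 - e 7 - e 6))) k = 0"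
      unfolding sum5v by (auto simp: e_def)
  qed
  moreover have "L \<in> set Rts"
  proof -
    have "real_of_int (m 1 * m 2 * m 3 * m 4 * m 5) = 1" using assms(3) mu unfolding prod5 by simp
    then have p: "m 1 * m 2 * m 3 * m 4 * m 5 = 1" by linarith
    have "s' = 1 \<or> s' = -1" "m 1 = 1 \<or> m 1 = -1" "m 2 = 1 \<or> m 2 = -1" "m 3 = 1 \<or> m 3 = -1"
      "m 4 = 1 \<or> m 4 = -1" "m 5 = 1 \<or> m 5 = -1"
      using s'(2) m[of 1] m[of 2] m[of 3] m[of 4] m[of 5] by auto
    then have "s' \<in> set [1,-1]" "m 1 \<in> set [1,-1]" "m 2 \<in> set [1,-1]" "m 3 \<in> set [1,-1]"
      "m 4 \<in> set [1,-1]" "m 5 \<in> set [1,-1]" by auto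
    then show ?thesis using p LC_ok unfolding L_def list_all_iff by blast
  qed
  ultimately show ?thesis by blast
qed

lemma Phi_cases:
  assumes "a \<in> PhiE6"
  obtains (A) s i j where "a = s *\<^sub>v (e i + e j)" "s \<in> {1, -1}" "1 \<le> i" "i < j" "j \<le> (5::nat)"
  | (B) s i j where "a = s *\<^sub>v (e i - e j)" "s \<in> {1, -1}" "1 \<le> i" "i < j" "j \<le> (5::nat)"
  | (C) s mu where "a = s *\<^sub>v ((1/2) *\<^sub>v ((\<Sum>k\<in>{1..5}. mu k *\<^sub>v e k) + e 8 - e 7 - e 6))"
     "s \<in> {1, -1}" "\<forall>k\<in>{1..5}. mu k \<in> {1, -1}" "(\<Prod>k\<in>{1..5}. mu k) = (1::real)"
  using assms unfolding PhiE6_def Un_iff mem_Collect_eq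
  by (elim disjE exE conjE) blast+

lemma Phi_sub: assumes "a \<in> PhiE6" shows "\<exists>r\<in>set Rts. a = vd 2 r"
proof -
  have "a \<in> vd 2 ` set Rts" using assms
  proof (cases rule: Phi_cases)
    case (A s i j) then show ?thesis using PhiA by simp
  next
    case (B s i j) then show ?thesis using PhiB by simp
  next
    case (C s mu) then show ?thesis using PhiC by simp
  qed
  then show ?thesis by blast
qed

lemma Phi_neg: assumes "a \<in> PhiE6" shows "(-1) *\<^sub>v a \<in> PhiE6"
proof -
  have sm: "(-1) *\<^sub>v (s *\<^sub>v x) = (-s) *\<^sub>v x" for s x by (simp add: smul_def fun_eq_iff)
  have n: "s \<in> {1, -1} \<Longrightarrow> -s \<in> {1, -1::real}" for s by auto
  show ?thesis using assms
  proof (cases rule: Phi_cases)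
    case (A s i j)
    then have "(-1) *\<^sub>v a = (-s) *\<^sub>v (e i + e j) \<and> -s \<in> {1, -1} \<and> 1 \<le> i \<and> i < j \<and> j \<le> 5"
      using sm n by simp
    then show ?thesis unfolding PhiE6_def by blast
  next
    case (B s i j)
    then have "(-1) *\<^sub>v a = (-s) *\<^sub>v (e i - e j) \<and> -s \<in> {1, -1} \<and> 1 \<le> i \<and> i < j \<and> j \<le> 5"
      using sm n by simp
    then show ?thesis unfolding PhiE6_def by blast
  next
    case (C s mu)
    then have "(-1) *\<^sub>v a = (-s) *\<^sub>v ((1/2) *\<^sub>v ((\<Sum>k\<in>{1..5}. mu k *\<^sub>v e k) + e 8 - e 7 - e 6)) \<and>
        -s \<in> {1, -1} \<and> (\<forall>k\<in>{1..5}. mu k \<in> {1, -1}) \<and> (\<Prod>k\<in>{1..5}. mu k) = (1::real)"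
      using sm n by simp
    then show ?thesis unfolding PhiE6_def by blast
  qed
qed




definition cok :: bool where
  "cok = list_all (\<lambda>k. case chain!k of (r, i, p, t) \<Rightarrow> r < 72 \<and> p < 72 \<and> 1 \<le> i \<and> i \<le> 6 \<and>
      (if t = 0 then Rts!r = sr i
       else p \<in> set (map fst (take k chain)) \<and> veq 16 (imv (rm (sr i)) (Rts!p)) 2 (Rts!r))) [0..<length chain]"

lemma cok: cok unfolding cok_def by code_simp

lemma chain_all: "sort (map fst chain) = [0..<72]" by code_simp

lemma Rts_len: "length Rts = 72" "list_all (\<lambda>r. length r = 8) Rts" by code_simp+

lemma refl_smul: "c \<noteq> 0 \<Longrightarrow> refl (c *\<^sub>v a) = refl a"
proof (cases "ip a a = 0")
  case True
  assume c: "c \<noteq> 0"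
  then show ?thesis using True by (simp add: refl_def fun_eq_iff ip_smul ip_smul2)
next
  case False
  assume c: "c \<noteq> 0"
  then show ?thesis using False by (simp add: refl_def fun_eq_iff ip_smul ip_smul2 field_simps)
qed

lemma chain_WE6: "k < length chain \<Longrightarrow> refl (vd 2 (Rts ! fst (chain!k))) \<in> WE6"
proof (induction k rule: less_induct)
  case (less k)
  obtain r i p t where rip: "chain!k = (r, i, p, t)" by (cases "chain!k") auto
  have "k \<in> set [0..<length chain]" using less.prems by simp
  then have h: "r < 72 \<and> p < 72 \<and> 1 \<le> i \<and> i \<le> 6 \<and>
      (if t = 0 then Rts!r = sr i
       else p \<in> set (map fst (take k chain)) \<and> veq 16 (imv (rm (sr i)) (Rts!p)) 2 (Rts!r))"
    using cok rip unfolding cok_def list_all_iff by fastforce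
  have i: "i \<in> {1..6}" using h by auto
  show ?case
  proof (cases "t = 0")
    case True
    then have "vd 2 (Rts!r) = simple_root i" using h sroot_vd[OF i] by simp
    then show ?thesis using rip WE6_gen[OF i] by simp
  next
    case False
    then have h2: "p \<in> set (map fst (take k chain))" "veq 16 (imv (rm (sr i)) (Rts!p)) 2 (Rts!r)" using h by auto
    obtain k' where k': "k' < length (take k chain)" "map fst (take k chain) ! k' = p"
      using h2(1) by (metis in_set_conv_nth length_map)
    have k'': "k' < k" "fst (chain ! k') = p" using k' less.prems by auto
    have IH: "refl (vd 2 (Rts!p)) \<in> WE6" using less.IH[of k'] k'' less.prems by simp
    have "vd 2 (Rts!r) = vd 16 (imv (rm (sr i)) (Rts!p))" using vd_eq[OF _ _ h2(2)] by simp
    also have "\<dots> = refl (simple_root i) (vd 2 (Rts!p))" using srefl[OF i] mp_vd[of 8 2] by simp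
    finally have e: "vd 2 (Rts!r) = refl (simple_root i) (vd 2 (Rts!p))" .
    have pr: "Rts!p \<in> set Rts" using h Rts_len by simp
    have "refl (vd 2 (Rts!r)) = refl (simple_root i) \<circ> refl (vd 2 (Rts!p)) \<circ> refl (simple_root i)"
      unfolding e by (rule refl_conj) (simp_all add: sroot_ip[OF i] ip_rr[OF pr])
    moreover have "refl (simple_root i) \<circ> refl (vd 2 (Rts!p)) \<circ> refl (simple_root i) \<in> WE6"
      using IH WE6_gen[OF i] by (intro WE6_comp)
    ultimately have "refl (vd 2 (Rts!r)) \<in> WE6" by (simp only:)
    then show ?thesis using rip by simp
  qed
qed

lemma Phi_WE6: assumes "a \<in> PhiE6" shows "refl a \<in> WE6"
proof -
  obtain r where r: "r \<in> set Rts" "a = vd 2 r" using Phi_sub[OF assms] by blast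
  obtain k where k: "k < 72" "Rts!k = r" using r(1) Rts_len by (metis in_set_conv_nth)
  have "k \<in> set (sort (map fst chain))" using chain_all k by simp
  then have "k \<in> set (map fst chain)" by simp
  then obtain k' where k': "k' < length (map fst chain)" "map fst chain ! k' = k" unfolding in_set_conv_nth by blast
  then have "k' < length chain" "fst (chain!k') = k" by auto
  then show ?thesis using chain_WE6[of k'] k r by simp
qed

definition lc :: "nat list \<Rightarrow> int list" where
  "lc c = map (\<lambda>k. \<Sum>i<6. int (c!i) * sr (Suc i) ! k) [0..<8]"

definition Pk :: "nat \<Rightarrow> bool" where
  "Pk k = (case ptab!k of (s, c) \<Rightarrow> (s = 1 \<or> s = -1) \<and> map (\<lambda>x. s * x) (Rts!k) = lc c)"

lemma pok: "list_all Pk [0..<72]"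
  unfolding Pk_def lc_def by code_simp

lemma lincomb: "(\<Sum>i\<in>{1..6}. real (c!(i-1)) *\<^sub>v simple_root i) = vd 2 (lc c)"
proof (rule vd_ext)
  fix k :: nat assume k: "k \<in> {1..8}"
  have "(\<Sum>i\<in>{1..6}. real (c!(i-1)) *\<^sub>v simple_root i) k = (\<Sum>i\<in>{1..6}. real (c!(i-1)) * simple_root i k)"
    by (simp add: sum_apply_fun)
  also have "\<dots> = (\<Sum>i\<in>{1..6}. (\<lambda>j. real (c!j) * of_int (sr (Suc j) ! (k-1)) / 2) (i - 1))"
  proof (rule sum.cong[OF refl])
    fix i assume i: "i \<in> {1..6::nat}"
    then have "Suc (i - 1) = i" by auto
    then show "real (c!(i-1)) * simple_root i k = (\<lambda>j. real (c!j) * of_int (sr (Suc j) ! (k-1)) / 2) (i - 1)"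
      using k sroot_vd[OF i] by (simp add: vd_def)
  qed
  also have "\<dots> = (\<Sum>j<6. real (c!j) * of_int (sr (Suc j) ! (k-1)) / 2)" by (rule sum_shift_gen)
  also have "\<dots> = vd 2 (lc c) k"
  proof -
    have "k - 1 < 8" using k by auto
    then have "lc c ! (k-1) = (\<Sum>i<6. int (c!i) * sr (Suc i) ! (k-1))" by (simp add: lc_def)
    then show ?thesis using k by (simp add: vd_def sum_divide_distrib)
  qed
  finally show "(\<Sum>i\<in>{1..6}. real (c!(i-1)) *\<^sub>v simple_root i) k = vd 2 (lc c) k" .
next
  fix k :: nat assume k: "k \<notin> {1..8}"
  have "(\<Sum>i\<in>{1..6}. real (c!(i-1)) *\<^sub>v simple_root i) k = (\<Sum>i\<in>{1..6}. real (c!(i-1)) * simple_root i k)"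
    by (simp add: sum_apply_fun)
  also have "\<dots> = 0" using k by (intro sum.neutral) (auto simp: sroot_vd vd_def)
  finally show "(\<Sum>i\<in>{1..6}. real (c!(i-1)) *\<^sub>v simple_root i) k = 0" .
qed

lemma one_smul: "(1::real) *\<^sub>v a = a" by (simp add: smul_def)

lemma root_pos: assumes "a \<in> PhiE6" shows "\<exists>b\<in>pos_roots. b = a \<or> b = (-1) *\<^sub>v a"
proof -
  obtain r where r: "r \<in> set Rts" "a = vd 2 r" using Phi_sub[OF assms] by blast
  obtain k where k: "k < 72" "Rts!k = r" using r(1) Rts_len by (metis in_set_conv_nth)
  obtain s c where sc: "ptab!k = (s, c)" by fastforce
  have "k \<in> set [0..<72]" using k by simp
  then have "Pk k" using pok unfolding list_all_iff by blast
  then have h: "(s = 1 \<or> s = -1) \<and> map (\<lambda>x. s * x) (Rts!k) = lc c" unfolding Pk_def sc by simp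
  have len: "length r = 8" using Rts_len(2) r(1) by (simp add: list_all_iff)
  define b where "b = of_int s *\<^sub>v a"
  have b1: "b = (\<Sum>i\<in>{1..6}. real (c!(i-1)) *\<^sub>v simple_root i)"
    unfolding b_def r(2) smul_vd[OF len] lincomb using h k by simp
  have b2: "b = a \<or> b = (-1) *\<^sub>v a" using h by (auto simp: b_def one_smul)
  have "b \<in> PhiE6" using b2 assms Phi_neg by auto
  then have "b \<in> pos_roots" unfolding pos_roots_def mem_Collect_eq using b1
    by (intro conjI exI[of _ "\<lambda>i. c!(i-1)"]) simp_all
  then show ?thesis using b2 by blast
qed

lemma label_neg: "label_ideal ((-1) *\<^sub>v b) = label_ideal b"
proof -
  have m: "(\<lambda>v. - f v) \<in> HBT" if "f \<in> HBT" for f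
  proof -
    have "(\<lambda>v. real_of_int (-1) * f v) \<in> HBT" by (rule HBT_mult[OF HBT_const that])
    then show ?thesis by simp
  qed
  have ipn: "ip ((-1) *\<^sub>v b) v = - ip b v" for v by (simp add: ip_smul)
  show ?thesis
  proof
    show "label_ideal ((-1) *\<^sub>v b) \<subseteq> label_ideal b"
    proof
      fix g assume "g \<in> label_ideal ((-1) *\<^sub>v b)"
      then obtain f where f: "f \<in> HBT" "g = (\<lambda>v. ip ((-1) *\<^sub>v b) v * f v)" unfolding label_ideal_def by blast
      then have "g = (\<lambda>v. ip b v * (- f v))" by (simp add: ipn)
      then show "g \<in> label_ideal b" unfolding label_ideal_def mem_Collect_eq using m[OF f(1)]
        by (intro exI[of _ "\<lambda>v. - f v"]) simp
    qed
  next
    show "label_ideal b \<subseteq> label_ideal ((-1) *\<^sub>v b)"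
    proof
      fix g assume "g \<in> label_ideal b"
      then obtain f where f: "f \<in> HBT" "g = (\<lambda>v. ip b v * f v)" unfolding label_ideal_def by blast
      then have "g = (\<lambda>v. ip ((-1) *\<^sub>v b) v * (- f v))" by (simp add: ipn)
      then show "g \<in> label_ideal ((-1) *\<^sub>v b)" unfolding label_ideal_def mem_Collect_eq using m[OF f(1)]
        by (intro exI[of _ "\<lambda>v. - f v"]) simp
    qed
  qed
qed




lemma Lam_ip: assumes "l \<in> Lambda" "b \<in> PhiE6" shows "ip l b \<in> {-1, 0, 1}"
proof -
  obtain n where n: "n < 27" "l = vd 24 (wv n)" using Lambda_wv[OF assms(1)] by blast
  obtain r where r: "r \<in> set Rts" "b = vd 2 r" using Phi_sub[OF assms(2)] by blast
  show ?thesis using ip_wr[OF n(1) r(1)] n r by simp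
qed

lemma Lam_norm: assumes "l \<in> Lambda" shows "ip l l = 4/3"
proof -
  obtain n where n: "n < 27" "l = vd 24 (wv n)" using Lambda_wv[OF assms] by blast
  show ?thesis using ip_ww[OF n(1)] n(2) by simp
qed

lemma Phi_norm: assumes "b \<in> PhiE6" shows "ip b b = 2"
proof -
  obtain r where r: "r \<in> set Rts" "b = vd 2 r" using Phi_sub[OF assms] by blast
  show ?thesis using ip_rr[OF r(1)] r(2) by simp
qed

lemma refl_root: "ip b b = 2 \<Longrightarrow> refl b l = l - ip l b *\<^sub>v b"
  by (simp add: refl_def)

lemma coset_I: "u \<in> WD5 \<Longrightarrow> w \<circ> u \<in> coset w" unfolding coset_def by blast

lemma coset_E: "y \<in> coset w \<Longrightarrow> \<exists>u\<in>WD5. y = w \<circ> u" unfolding coset_def by blast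

lemma coset_mem: "w \<in> coset w" using coset_I[OF WD5_id, of w] by simp

theorem proposition4p1:
  fixes rho :: "vec \<Rightarrow> (vec \<Rightarrow> vec)" and lam lam' :: vec
  assumes "\<forall>l\<in>Lambda. rho l \<in> WE6 \<and> rho l tbar = l"
    and "lam \<in> Lambda" and "lam' \<in> Lambda"
  shows "(GKM_adjacent (coset (rho lam)) (coset (rho lam')) \<longleftrightarrow>
            (\<exists>a\<in>PhiE6. lam - lam' = a))
       \<and> (\<forall>a\<in>PhiE6. lam - lam' = a \<longrightarrow>
            (\<forall>b. GKM_edge (coset (rho lam)) (coset (rho lam')) b \<longrightarrow>
                 label_ideal b = label_ideal a))"
proof -
  have r1: "rho lam \<in> WE6" "rho lam tbar = lam" using assms(1,2) by auto
  have r2: "rho lam' \<in> WE6" "rho lam' tbar = lam'" using assms(1,3) by auto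
  have E: "\<exists>c. (c = 1 \<or> c = -1) \<and> lam - lam' = c *\<^sub>v b \<and> b \<in> PhiE6"
    if edge: "GKM_edge (coset (rho lam)) (coset (rho lam')) b" for b
  proof -
    have bP: "b \<in> PhiE6" using edge unfolding GKM_edge_def pos_roots_def by blast
    have ne: "coset (rho lam) \<noteq> coset (rho lam')" using edge unfolding GKM_edge_def by blast
    have img: "(\<lambda>u. refl b \<circ> u) ` coset (rho lam) = coset (rho lam')" using edge unfolding GKM_edge_def by blast
    have "refl b \<circ> rho lam \<in> coset (rho lam')" using img coset_mem[of "rho lam"] by blast
    then obtain u where u: "u \<in> WD5" "refl b \<circ> rho lam = rho lam' \<circ> u" by (metis coset_E)
    have "refl b lam = lam'" using fun_cong[OF u(2), of tbar] WD5_tbar[OF u(1)] r1 r2 by simp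
    then have l': "lam' = lam - ip lam b *\<^sub>v b" using refl_root[OF Phi_norm[OF bP]] by simp
    have "lam \<noteq> lam'" using ne by auto
    then have c0: "ip lam b \<noteq> 0" using l' by (auto simp: fun_eq_iff smul_def)
    have "ip lam b \<in> {-1, 0, 1}" using Lam_ip[OF assms(2) bP] .
    then have "ip lam b = 1 \<or> ip lam b = -1" using c0 by auto
    moreover have "lam - lam' = ip lam b *\<^sub>v b" using l' by (simp add: fun_eq_iff)
    ultimately show ?thesis using bP by blast
  qed
  have part1: "GKM_adjacent (coset (rho lam)) (coset (rho lam')) \<longleftrightarrow> (\<exists>a\<in>PhiE6. lam - lam' = a)"
  proof
    assume "GKM_adjacent (coset (rho lam)) (coset (rho lam'))"
    then obtain b where "GKM_edge (coset (rho lam)) (coset (rho lam')) b" unfolding GKM_adjacent_def by blast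
    then obtain c where c: "c = 1 \<or> c = -1" "lam - lam' = c *\<^sub>v b" "b \<in> PhiE6" using E by blast
    have "c *\<^sub>v b \<in> PhiE6" using c Phi_neg by (auto simp: one_smul)
    then show "\<exists>a\<in>PhiE6. lam - lam' = a" using c by blast
  next
    assume "\<exists>a\<in>PhiE6. lam - lam' = a"
    then obtain a where a: "a \<in> PhiE6" "lam - lam' = a" by blast
    have aa: "ip a a = 2" using Phi_norm[OF a(1)] .
    have n1: "ip lam lam = 4/3" using Lam_norm[OF assms(2)] .
    have n2: "ip lam' lam' = 4/3" using Lam_norm[OF assms(3)] .
    have "ip a a = ip lam lam - 2 * ip lam lam' + ip lam' lam'"
      unfolding a(2)[symmetric] by (simp add: ip_diff ip_diff2 ip_sym[of lam' lam])
    then have x: "ip lam lam' = 1/3" using aa n1 n2 by simp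
    have la: "ip lam a = 1" unfolding a(2)[symmetric] using n1 x by (simp add: ip_diff2)
    have "refl a lam = lam - a" using refl_root[OF aa, of lam] la by (simp add: one_smul)
    then have ra1: "refl a lam = lam'" unfolding a(2)[symmetric] by simp
    have ra2: "refl a lam' = lam" using refl_refl[of a lam] aa ra1 by simp
    obtain b where b: "b \<in> pos_roots" "b = a \<or> b = (-1) *\<^sub>v a" using root_pos[OF a(1)] by blast
    have rb: "refl b = refl a" using b(2) refl_smul[of "-1" a] by auto
    have ra: "refl a \<in> WE6" using Phi_WE6[OF a(1)] .
    obtain v1 where v1: "v1 \<in> WD5" "refl a \<circ> rho lam = rho lam' \<circ> v1"
      using SAME[OF WE6_comp[OF ra r1(1)] r2(1)] ra1 r1 r2 by auto
    obtain v2 where v2: "v2 \<in> WD5" "refl a \<circ> rho lam' = rho lam \<circ> v2"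
      using SAME[OF WE6_comp[OF ra r2(1)] r1(1)] ra2 r1 r2 by auto
    have inv: "refl a \<circ> refl a = id" using refl_refl[of a] aa by (simp add: fun_eq_iff)
    have ne: "coset (rho lam) \<noteq> coset (rho lam')"
    proof
      assume eq: "coset (rho lam) = coset (rho lam')"
      have "rho lam' \<in> coset (rho lam)" using eq coset_mem by simp
      then obtain u where u: "u \<in> WD5" "rho lam' = rho lam \<circ> u" by (metis coset_E)
      have "lam' = lam" using fun_cong[OF u(2), of tbar] WD5_tbar[OF u(1)] r1 r2 by simp
      then have "a = 0" using a(2) by simp
      then show False using aa by (simp add: ip_def)
    qed
    have img: "(\<lambda>u. refl b \<circ> u) ` coset (rho lam) = coset (rho lam')"
    proof
      show "(\<lambda>u. refl b \<circ> u) ` coset (rho lam) \<subseteq> coset (rho lam')"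
      proof
        fix y assume "y \<in> (\<lambda>u. refl b \<circ> u) ` coset (rho lam)"
        then obtain x where x: "x \<in> coset (rho lam)" "y = refl b \<circ> x" by blast
        then obtain u where u: "u \<in> WD5" "y = refl b \<circ> (rho lam \<circ> u)" by (metis coset_E)
        have "y = (refl a \<circ> rho lam) \<circ> u" using u(2) rb by (simp only: o_assoc)
        also have "\<dots> = rho lam' \<circ> (v1 \<circ> u)" by (simp only: v1(2) o_assoc)
        finally have "y = rho lam' \<circ> (v1 \<circ> u)" .
        then show "y \<in> coset (rho lam')" using coset_I[OF WD5_comp[OF v1(1) u(1)]] by simp
      qed
    next
      show "coset (rho lam') \<subseteq> (\<lambda>u. refl b \<circ> u) ` coset (rho lam)"
      proof
        fix y assume "y \<in> coset (rho lam')"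
        then obtain u where u: "u \<in> WD5" "y = rho lam' \<circ> u" by (metis coset_E)
        have "y = (refl a \<circ> refl a) \<circ> rho lam' \<circ> u" by (simp only: u(2) inv id_comp)
        also have "\<dots> = refl a \<circ> ((refl a \<circ> rho lam') \<circ> u)" by (simp only: o_assoc)
        also have "\<dots> = refl a \<circ> ((rho lam \<circ> v2) \<circ> u)" by (simp only: v2(2))
        also have "\<dots> = refl b \<circ> (rho lam \<circ> (v2 \<circ> u))" by (simp only: rb o_assoc)
        finally have "y = refl b \<circ> (rho lam \<circ> (v2 \<circ> u))" .
        moreover have "rho lam \<circ> (v2 \<circ> u) \<in> coset (rho lam)"
          using coset_I[OF WD5_comp[OF v2(1) u(1)]] .
        ultimately show "y \<in> (\<lambda>u. refl b \<circ> u) ` coset (rho lam)" by (rule image_eqI)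
      qed
    qed
    have "GKM_edge (coset (rho lam)) (coset (rho lam')) b"
      unfolding GKM_edge_def GKM_vertices_def using r1 r2 ne b(1) img by blast
    then show "GKM_adjacent (coset (rho lam)) (coset (rho lam'))" unfolding GKM_adjacent_def by blast
  qed
  have part2: "\<forall>a\<in>PhiE6. lam - lam' = a \<longrightarrow>
            (\<forall>b. GKM_edge (coset (rho lam)) (coset (rho lam')) b \<longrightarrow> label_ideal b = label_ideal a)"
  proof (intro ballI impI allI)
    fix a b assume a: "a \<in> PhiE6" "lam - lam' = a" and edge: "GKM_edge (coset (rho lam)) (coset (rho lam')) b"
    obtain c where c: "c = 1 \<or> c = -1" "lam - lam' = c *\<^sub>v b" using E[OF edge] by blast
    have ac: "a = c *\<^sub>v b" using a(2) c(2) by simp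
    show "label_ideal b = label_ideal a"
    proof (cases "c = 1")
      case True then show ?thesis using ac by (simp add: one_smul)
    next
      case False then have "c = -1" using c(1) by simp
      then show ?thesis using ac label_neg[of b] by simp
    qed
  qed
  show ?thesis using part1 part2 by blast
qed


end
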